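(* Let $(\Omega,\mathcal E_\Omega)$ be a finite-dimensional generalized probabilistic theory whose state space $\Omega$ is transitive and whose positive cone $V_+$ is self-dual with respect to $\langle\cdot,\cdot\rangle_{GL(\Omega)}$. Let $F=\{f_a\}_{a\in A}$ and $G=\{g_b\}_{b\in B}$ be ideal observables on $\Omega$ with outcome sets finite metric spaces $(A,d_A)$, $(B,d_B)$, and let $\widetilde M^{FG}=\{\widetilde m^{FG}_{ab}\}_{(a,b)\in A\times B}$ be an arbitrary observable on $A\times B$ with marginals $\widetilde M^F=\{\sum_b\widetilde m^{FG}_{ab}\}_a$ and $\widetilde M^G=\{\sum_a\widetilde m^{FG}_{ab}\}_b$. Then for all $\epsilon_1,\epsilon_2\in(0,1]$ with $\epsilon_1+\epsilon_2\le1$ there exists a state $\omega\in\Omega$ such that $$D_W(\widetilde M^F,F)\ge\frac{\epsilon_1}{2}W_{\epsilon_1+\epsilon_2}(\omega^F),\qquad D_W(\widetilde M^G,G)\ge\frac{\epsilon_2}{2}W_{\epsilon_1+\epsilon_2}(\omega^G).$$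
   Context: Setting: $V=\mathbb R^{N+1}$ with Euclidean inner product $(\cdot,\cdot)_E$. A state space $\Omega\subset V$ is a compact convex set with $\mathrm{span}(\Omega)=V$ and $0\notin\mathrm{aff}(\Omega)$; $V_+=\{\lambda\omega:\lambda\ge0,\omega\in\Omega\}$; the unit effect $u\in V^*$ satisfies $u(\omega)=1$ on $\Omega$; effects are $\mathcal E_\Omega=\{e\in V^*:0\le e(\omega)\le1\ \forall\omega\in\Omega\}$. An observable with finite outcome set $X$ is a family $\{e_x\}_{x\in X}$ of effects with $\sum_x e_x=u$ (the trivial observable $\{u\}$ is excluded). $\Omega^{\mathrm{ext}}$: extreme points of $\Omega$. An effect is pure if it is an extreme point of $\mathcal E_\Omega$; indecomposable if $e\neq0$ and $e=e_1+e_2$ with $e_1,e_2\in\mathcal E_\Omega$ forces $e_1,e_2$ to be scalar multiples of $e$. $F=\{f_a\}$ is ideal if each $f_a$ equals $\sum_{i\in I_a}e_i$ or $u-\sum_{i\in I_a}e_i$ for a finite family of pure indecomposable effects $e_i$. $GL(\Omega)$: group of linear bijections $T$ of $V$ with $T(\Omega)=\Omega$, $\mu$ its normalized Haar measure, $\langle x,y\rangle_{GL(\Omega)}=\int(Tx,Ty)_E\,d\mu(T)$. $\Omega$ is transitive if $GL(\Omega)$ acts transitively on $\Omega^{\mathrm{ext}}$; $V_+$ is self-dual w.r.t. $\langle\cdot,\cdot\rangle_{GL(\Omega)}$ if $V_+=\{y:\langle x,y\rangle_{GL(\Omega)}\ge0\ \forall x\in V_+\}$. $\omega^F=\{f_a(\omega)\}_a$.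 $O_{d_A}(a;w)=\{x\in A:d_A(x,a)\le w/2\}$; overall width $W_\epsilon(\omega^F)=\inf\{w>0:\exists a,\ \sum_{a'\in O_{d_A}(a;w)}f_{a'}(\omega)\ge1-\epsilon\}$. Werner's measure: with $\Lambda=\{h:A\to\mathbb R:|h(a_1)-h(a_2)|\le d_A(a_1,a_2)\ \forall a_1,a_2\}$, $D_W(\widetilde F,F)=\sup_{\omega\in\Omega}\sup_{h\in\Lambda}\left|\sum_{a\in A}h(a)\widetilde f_a(\omega)-\sum_{a\in A}h(a)f_a(\omega)\right|$. *)

theory Defs
  imports "HOL-Analysis.Analysis" "HOL-Probability.Probability"
begin

text \<open>Finite-dimensional GPT on V = real^'n (the Euclidean space of dimension N+1 = CARD('n)).
  The dual space V* is identified with V via the Euclidean inner product, so an effect e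
  acts on a state w as e \<bullet> w.\<close>

definition state_space :: "(real^'n) set \<Rightarrow> bool" where
  "state_space \<Omega> \<longleftrightarrow> compact \<Omega> \<and> convex \<Omega> \<and> span \<Omega> = UNIV \<and> 0 \<notin> affine hull \<Omega>"

definition positive_cone :: "(real^'n) set \<Rightarrow> (real^'n) set" where
  "positive_cone \<Omega> = {c *\<^sub>R w | c w. c \<ge> 0 \<and> w \<in> \<Omega>}"

definition unit_effect :: "(real^'n) set \<Rightarrow> real^'n" where
  "unit_effect \<Omega> = (SOME u. \<forall>w\<in>\<Omega>. u \<bullet> w = 1)"

definition effects :: "(real^'n) set \<Rightarrow> (real^'n) set" where
  "effects \<Omega> = {e. \<forall>w\<in>\<Omega>. 0 \<le> e \<bullet> w \<and> e \<bullet> w \<le> 1}"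

text \<open>Observable with finite outcome set X; the trivial observable {u} is excluded.\<close>
definition observable :: "(real^'n) set \<Rightarrow> 'x set \<Rightarrow> ('x \<Rightarrow> real^'n) \<Rightarrow> bool" where
  "observable \<Omega> X e \<longleftrightarrow> finite X \<and> X \<noteq> {} \<and> (\<forall>x\<in>X. e x \<in> effects \<Omega>)
     \<and> (\<Sum>x\<in>X. e x) = unit_effect \<Omega> \<and> e ` X \<noteq> {unit_effect \<Omega>}"

definition pure_effect :: "(real^'n) set \<Rightarrow> real^'n \<Rightarrow> bool" where
  "pure_effect \<Omega> e \<longleftrightarrow> e extreme_point_of (effects \<Omega>)"

definition indecomposable_effect :: "(real^'n) set \<Rightarrow> real^'n \<Rightarrow> bool" where
  "indecomposable_effect \<Omega> e \<longleftrightarrow> e \<in> effects \<Omega> \<and> e \<noteq> 0 \<and>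
     (\<forall>e1\<in>effects \<Omega>. \<forall>e2\<in>effects \<Omega>. e = e1 + e2 \<longrightarrow>
        (\<exists>c. e1 = c *\<^sub>R e) \<and> (\<exists>c. e2 = c *\<^sub>R e))"

definition ideal_observable :: "(real^'n) set \<Rightarrow> 'x set \<Rightarrow> ('x \<Rightarrow> real^'n) \<Rightarrow> bool" where
  "ideal_observable \<Omega> X f \<longleftrightarrow> observable \<Omega> X f \<and>
     (\<forall>a\<in>X. \<exists>es :: (real^'n) list.
        (\<forall>e\<in>set es. pure_effect \<Omega> e \<and> indecomposable_effect \<Omega> e) \<and>
        (f a = sum_list es \<or> f a = unit_effect \<Omega> - sum_list es))"

definition GL_state :: "(real^'n) set \<Rightarrow> (real^'n^'n) set" where
  "GL_state \<Omega> = {T. invertible T \<and> (\<lambda>x. T *v x) ` \<Omega> = \<Omega>}"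

definition transitive_state_space :: "(real^'n) set \<Rightarrow> bool" where
  "transitive_state_space \<Omega> \<longleftrightarrow>
     (\<forall>x y. x extreme_point_of \<Omega> \<longrightarrow> y extreme_point_of \<Omega> \<longrightarrow>
        (\<exists>T\<in>GL_state \<Omega>. T *v x = y))"

definition haar_GL :: "(real^'n) set \<Rightarrow> (real^'n^'n) measure \<Rightarrow> bool" where
  "haar_GL \<Omega> \<mu> \<longleftrightarrow> sets \<mu> = sets borel \<and> prob_space \<mu> \<and> GL_state \<Omega> \<in> sets \<mu>
     \<and> emeasure \<mu> (GL_state \<Omega>) = 1
     \<and> (\<forall>S\<in>GL_state \<Omega>. distr \<mu> borel (\<lambda>T. S ** T) = \<mu>)"

definition GL_inner :: "(real^'n^'n) measure \<Rightarrow> real^'n \<Rightarrow> real^'n \<Rightarrow> real" where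
  "GL_inner \<mu> x y = (\<integral>T. (T *v x) \<bullet> (T *v y) \<partial>\<mu>)"

definition self_dual_GL :: "(real^'n) set \<Rightarrow> bool" where
  "self_dual_GL \<Omega> \<longleftrightarrow> (\<exists>\<mu>. haar_GL \<Omega> \<mu> \<and>
     positive_cone \<Omega> = {y. \<forall>x\<in>positive_cone \<Omega>. GL_inner \<mu> x y \<ge> 0})"

definition overall_width ::
  "'a set \<Rightarrow> ('a \<Rightarrow> 'a \<Rightarrow> real) \<Rightarrow> ('a \<Rightarrow> real^'n) \<Rightarrow> real \<Rightarrow> real^'n \<Rightarrow> real" where
  "overall_width A d f \<epsilon> w = Inf {wd. wd > 0 \<and>
     (\<exists>a\<in>A. (\<Sum>a'\<in>{x\<in>A. d x a \<le> wd / 2}. f a' \<bullet> w) \<ge> 1 - \<epsilon>)}"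

definition lipschitz1 :: "'a set \<Rightarrow> ('a \<Rightarrow> 'a \<Rightarrow> real) \<Rightarrow> ('a \<Rightarrow> real) set" where
  "lipschitz1 A d = {h. \<forall>a1\<in>A. \<forall>a2\<in>A. \<bar>h a1 - h a2\<bar> \<le> d a1 a2}"

definition werner_D ::
  "(real^'n) set \<Rightarrow> 'a set \<Rightarrow> ('a \<Rightarrow> 'a \<Rightarrow> real) \<Rightarrow> ('a \<Rightarrow> real^'n) \<Rightarrow> ('a \<Rightarrow> real^'n) \<Rightarrow> real" where
  "werner_D \<Omega> A d ft f = (SUP w\<in>\<Omega>. SUP h\<in>lipschitz1 A d.
     \<bar>(\<Sum>a\<in>A. h a * (ft a \<bullet> w)) - (\<Sum>a\<in>A. h a * (f a \<bullet> w))\<bar>)"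

end

theory Submission
  imports Defs
begin


lemma omega_ne:
  fixes \<Omega> :: "(real^'n) set"
  assumes "state_space \<Omega>" shows "\<Omega> \<noteq> {}"
proof
  assume "\<Omega> = {}"
  then have "span \<Omega> = {0}" by simp
  moreover have "axis undefined (1::real) \<in> (UNIV :: (real^'n) set)" by simp
  ultimately show False using assms unfolding state_space_def
    by (metis axis_eq_0_iff singletonD zero_neq_one)
qed

lemma unit_exists:
  fixes \<Omega> :: "(real^'n) set"
  assumes "state_space \<Omega>" shows "\<exists>u. \<forall>w\<in>\<Omega>. u \<bullet> w = 1"
proof -
  obtain w0 where w0: "w0 \<in> \<Omega>" using omega_ne[OF assms] by blast
  define L where "L = span ((\<lambda>x. -w0+x) ` (\<Omega>-{w0}))"
  have ah: "affine hull \<Omega> = (\<lambda>x. w0+x) ` L" unfolding L_def by (rule affine_hull_span2[OF w0])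
  have "w0 \<notin> L"
  proof
    assume "w0 \<in> L"
    then have "-w0 \<in> L" unfolding L_def by (simp add: span_neg)
    then have "0 \<in> affine hull \<Omega>" unfolding ah by force
    then show False using assms unfolding state_space_def by blast
  qed
  obtain y z where y: "y \<in> span L" and z: "\<And>w. w \<in> span L \<Longrightarrow> orthogonal z w" and yz: "w0 = y + z"
    using orthogonal_subspace_decomp_exists by blast
  have yL: "y \<in> L" using y unfolding L_def by (metis span_span)
  have "z \<noteq> 0" using yz yL \<open>w0 \<notin> L\<close> by auto
  have zy: "z \<bullet> y = 0" using z[of y] y by (simp add: orthogonal_def)
  define u where "u = (1 / (z \<bullet> z)) *\<^sub>R z"
  have zz: "z \<bullet> z > 0" using \<open>z \<noteq> 0\<close> by simp
  have "\<forall>w\<in>\<Omega>. u \<bullet> w = 1"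
  proof
    fix w assume w: "w \<in> \<Omega>"
    have "-w0 + w \<in> L"
    proof (cases "w = w0")
      case True then show ?thesis by (simp add: L_def span_zero)
    next
      case False then show ?thesis unfolding L_def using w by (intro span_base) auto
    qed
    then have "z \<bullet> (-w0 + w) = 0" using z[of "-w0+w"] span_base[of "-w0+w" L] by (simp add: orthogonal_def)
    then have "z \<bullet> w = z \<bullet> w0" by (simp add: inner_diff_right)
    also have "\<dots> = z \<bullet> z" using yz zy by (simp add: inner_add_right inner_commute)
    finally show "u \<bullet> w = 1" unfolding u_def using zz by simp
  qed
  then show ?thesis by blast
qed

lemma unit_effect_prop:
  fixes \<Omega> :: "(real^'n) set"
  assumes "state_space \<Omega>" "w \<in> \<Omega>" shows "unit_effect \<Omega> \<bullet> w = 1"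
  using someI_ex[OF unit_exists[OF assms(1)]] assms(2) unfolding unit_effect_def by blast



lemma span_rep:
  fixes x :: "real^'n"
  assumes "x \<in> span S"
  obtains t r where "finite t" "t \<subseteq> S" "x = (\<Sum>a\<in>t. r a *\<^sub>R a)"
  using assms unfolding span_explicit by blast

lemma orbit_bound:
  fixes \<Omega> :: "(real^'n) set"
  assumes "state_space \<Omega>"
  shows "\<exists>C. \<forall>T::real^'n^'n. (\<forall>w\<in>\<Omega>. T *v w \<in> \<Omega>) \<longrightarrow> norm (T *v x) \<le> C"
proof -
  have "bounded \<Omega>" using assms unfolding state_space_def by (simp add: compact_imp_bounded)
  then obtain R where R: "\<And>w. w \<in> \<Omega> \<Longrightarrow> norm w \<le> R" by (meson bounded_iff)
  have "x \<in> span \<Omega>" using assms unfolding state_space_def by simp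
  then obtain t r where t: "finite t" "t \<subseteq> \<Omega>" and x: "x = (\<Sum>a\<in>t. r a *\<^sub>R a)" by (rule span_rep)
  have "norm (T *v x) \<le> (\<Sum>a\<in>t. \<bar>r a\<bar> * R)" if T: "\<forall>w\<in>\<Omega>. T *v w \<in> \<Omega>" for T :: "real^'n^'n"
  proof -
    have "T *v x = (\<Sum>a\<in>t. r a *\<^sub>R (T *v a))"
      unfolding x by (simp add: linear_sum[OF matrix_vector_mul_linear] linear_scale[OF matrix_vector_mul_linear] o_def)
    also have "norm \<dots> \<le> (\<Sum>a\<in>t. norm (r a *\<^sub>R (T *v a)))" by (rule norm_sum)
    also have "\<dots> \<le> (\<Sum>a\<in>t. \<bar>r a\<bar> * R)"
    proof (rule sum_mono)
      fix a assume "a \<in> t"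
      then have "norm (T *v a) \<le> R" using T t R by blast
      then show "norm (r a *\<^sub>R (T *v a)) \<le> \<bar>r a\<bar> * R" by (simp add: mult_left_mono)
    qed
    finally show ?thesis .
  qed
  then show ?thesis by blast
qed

definition B0 :: "(real^'n) set \<Rightarrow> (real^'n^'n) set" where
  "B0 \<Omega> = {T. \<forall>w\<in>\<Omega>. T *v w \<in> \<Omega>}"

lemma B0_bounded:
  fixes \<Omega> :: "(real^'n) set"
  assumes "state_space \<Omega>"
  shows "bounded (B0 \<Omega>)"
proof -
  have "\<forall>j. \<exists>C. \<forall>T::real^'n^'n. T \<in> B0 \<Omega> \<longrightarrow> norm (T *v axis j 1) \<le> C"
    using orbit_bound[OF assms] unfolding B0_def by blast
  then obtain C where C: "\<And>j T. T \<in> B0 \<Omega> \<Longrightarrow> norm (T *v axis j 1) \<le> C j" by metis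
  have "norm T \<le> (\<Sum>i::'n\<in>UNIV. \<Sum>j\<in>UNIV. C j)" if "T \<in> B0 \<Omega>" for T :: "real^'n^'n"
  proof -
    have "norm T \<le> (\<Sum>i\<in>UNIV. norm (T $ i))" by (simp add: norm_vec_def L2_set_le_sum)
    also have "\<dots> \<le> (\<Sum>i::'n\<in>UNIV. \<Sum>j\<in>UNIV. C j)"
    proof (rule sum_mono)
      fix i
      have "norm (T $ i) \<le> (\<Sum>j\<in>UNIV. \<bar>T $ i $ j\<bar>)" by (rule norm_le_l1_cart)
      also have "\<dots> \<le> (\<Sum>j\<in>UNIV. C j)"
      proof (rule sum_mono)
        fix j
        have "T $ i $ j = (T *v axis j 1) $ i"
          by (simp add: matrix_vector_mult_def axis_def if_distrib cong: if_cong)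
        then have "\<bar>T $ i $ j\<bar> \<le> norm (T *v axis j 1)" by (metis component_le_norm_cart)
        then show "\<bar>T $ i $ j\<bar> \<le> C j" using C[OF that, of j] by linarith
      qed
      finally show "norm (T $ i) \<le> (\<Sum>j\<in>UNIV. C j)" .
    qed
    finally show ?thesis .
  qed
  then show ?thesis unfolding bounded_iff by blast
qed

lemma B0_closed:
  fixes \<Omega> :: "(real^'n) set"
  assumes "state_space \<Omega>"
  shows "closed (B0 \<Omega>)"
proof -
  have cl: "closed \<Omega>" using assms unfolding state_space_def by (simp add: compact_imp_closed)
  have "B0 \<Omega> = (\<Inter>w\<in>\<Omega>. (\<lambda>T. T *v w) -` \<Omega>)" unfolding B0_def by auto
  moreover have "closed ((\<lambda>T::real^'n^'n. T *v w) -` \<Omega>)" for w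
  proof -
    have "continuous_on UNIV (\<lambda>T::real^'n^'n. T *v w)" unfolding matrix_vector_mult_def
      by (intro continuous_on_vec_lambda continuous_on_sum continuous_on_mult continuous_on_component continuous_on_id continuous_on_const)
    then show ?thesis using continuous_on_closed_vimage[of UNIV "\<lambda>T. T *v w"] cl by auto
  qed
  ultimately show ?thesis by auto
qed

lemma GL_char:
  fixes \<Omega> :: "(real^'n) set"
  shows "GL_state \<Omega> = fst ` {p. fst p ** snd p = mat 1 \<and> fst p \<in> B0 \<Omega> \<and> snd p \<in> B0 \<Omega>}"
proof safe
  fix T assume T: "T \<in> GL_state \<Omega>"
  then obtain T' where TT': "T ** T' = mat 1" "T' ** T = mat 1" unfolding GL_state_def invertible_def by blast
  have im: "(\<lambda>x. T *v x) ` \<Omega> = \<Omega>" using T unfolding GL_state_def by blast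
  have "T \<in> B0 \<Omega>" using im unfolding B0_def by blast
  moreover have "T' \<in> B0 \<Omega>" unfolding B0_def
  proof (intro CollectI ballI)
    fix w assume "w \<in> \<Omega>"
    then obtain w' where "w' \<in> \<Omega>" "w = T *v w'" using im by force
    then show "T' *v w \<in> \<Omega>" by (simp add: matrix_vector_mul_assoc TT')
  qed
  ultimately show "T \<in> fst ` {p. fst p ** snd p = mat 1 \<and> fst p \<in> B0 \<Omega> \<and> snd p \<in> B0 \<Omega>}"
    using TT' by (intro image_eqI[of _ _ "(T,T')"]) auto
next
  fix T T' :: "real^'n^'n"
  assume TT': "fst (T,T') ** snd (T,T') = mat 1" and B: "fst (T,T') \<in> B0 \<Omega>" "snd (T,T') \<in> B0 \<Omega>"
  have "invertible T" using TT' by (auto simp: invertible_right_inverse)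
  moreover have "(\<lambda>x. T *v x) ` \<Omega> = \<Omega>"
  proof
    show "(\<lambda>x. T *v x) ` \<Omega> \<subseteq> \<Omega>" using B unfolding B0_def by auto
    show "\<Omega> \<subseteq> (\<lambda>x. T *v x) ` \<Omega>"
    proof
      fix w assume "w \<in> \<Omega>"
      moreover have "w = T *v (T' *v w)" using TT' by (simp add: matrix_vector_mul_assoc)
      ultimately show "w \<in> (\<lambda>x. T *v x) ` \<Omega>" using B unfolding B0_def by auto
    qed
  qed
  ultimately show "fst (T,T') \<in> GL_state \<Omega>" unfolding GL_state_def by simp
qed

lemma GL_compact:
  fixes \<Omega> :: "(real^'n) set"
  assumes "state_space \<Omega>"
  shows "compact (GL_state \<Omega>)"
proof -
  let ?K = "{p. fst p ** snd p = mat 1 \<and> fst p \<in> B0 \<Omega> \<and> snd p \<in> B0 \<Omega>} :: ((real^'n^'n) \<times> (real^'n^'n)) set"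
  have "?K = {p. fst p ** snd p = mat 1} \<inter> (B0 \<Omega> \<times> B0 \<Omega>)" by auto
  moreover have "closed {p::(real^'n^'n) \<times> (real^'n^'n). fst p ** snd p = mat 1}"
    by (rule closed_Collect_eq) (auto intro!: continuous_intros simp: matrix_matrix_mult_def)
  moreover have "closed (B0 \<Omega> \<times> B0 \<Omega>)" using B0_closed[OF assms] by (simp add: closed_Times)
  ultimately have "closed ?K" by auto
  moreover have "bounded ?K"
  proof -
    have "bounded (B0 \<Omega> \<times> B0 \<Omega>)" using B0_bounded[OF assms] B0_bounded[OF assms] by (rule bounded_Times)
    then show ?thesis by (rule bounded_subset) auto
  qed
  ultimately have "compact ?K" by (simp add: compact_eq_bounded_closed)
  then have "compact (fst ` ?K)" by (intro compact_continuous_image continuous_intros)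
  then show ?thesis by (simp add: GL_char)
qed

lemma GL_one: "mat 1 \<in> GL_state \<Omega>"
  unfolding GL_state_def by (auto simp: invertible_def)

lemma GL_mult: assumes "S \<in> GL_state \<Omega>" "T \<in> GL_state \<Omega>" shows "S ** T \<in> GL_state \<Omega>"
proof -
  have a: "invertible S" "(*v) S ` \<Omega> = \<Omega>" "invertible T" "(*v) T ` \<Omega> = \<Omega>"
    using assms unfolding GL_state_def by auto
  have "(*v) (S ** T) ` \<Omega> = (*v) S ` ((*v) T ` \<Omega>)" by (auto simp: matrix_vector_mul_assoc[symmetric])
  then show ?thesis using a unfolding GL_state_def by (simp add: invertible_mult)
qed

lemma GL_inv:
  assumes "T \<in> GL_state \<Omega>"
  obtains T' where "T' \<in> GL_state \<Omega>" "T ** T' = mat 1" "T' ** T = mat 1"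
proof -
  obtain T' where TT': "T ** T' = mat 1" "T' ** T = mat 1" using assms unfolding GL_state_def invertible_def by blast
  have im: "(\<lambda>x. T *v x) ` \<Omega> = \<Omega>" using assms unfolding GL_state_def by blast
  have "(\<lambda>x. T' *v x) ` \<Omega> = \<Omega>"
  proof
    show "(\<lambda>x. T' *v x) ` \<Omega> \<subseteq> \<Omega>"
    proof
      fix v assume "v \<in> (\<lambda>x. T' *v x) ` \<Omega>"
      then obtain w where w: "w \<in> \<Omega>" "v = T' *v w" by blast
      then obtain w' where "w' \<in> \<Omega>" "w = T *v w'" using im by force
      then show "v \<in> \<Omega>" using w by (simp add: matrix_vector_mul_assoc TT')
    qed
    show "\<Omega> \<subseteq> (\<lambda>x. T' *v x) ` \<Omega>"
    proof
      fix w assume "w \<in> \<Omega>"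
      moreover have "w = T' *v (T *v w)" using TT' by (simp add: matrix_vector_mul_assoc)
      ultimately show "w \<in> (\<lambda>x. T' *v x) ` \<Omega>" using im by auto
    qed
  qed
  then have "T' \<in> GL_state \<Omega>" using TT' unfolding GL_state_def invertible_def by blast
  then show ?thesis using that TT' by blast
qed

lemma GL_maps: "T \<in> GL_state \<Omega> \<Longrightarrow> w \<in> \<Omega> \<Longrightarrow> T *v w \<in> \<Omega>"
  unfolding GL_state_def by blast

lemma GL_bound:
  fixes \<Omega> :: "(real^'n) set"
  assumes "state_space \<Omega>"
  obtains C where "\<And>T. T \<in> GL_state \<Omega> \<Longrightarrow> norm (T *v x) \<le> C"
  using orbit_bound[OF assms, of x] GL_maps by metis



lemma cont_mv: "continuous_on UNIV (\<lambda>T::real^'n^'n. T *v w)"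
  unfolding matrix_vector_mult_def
  by (intro continuous_on_vec_lambda continuous_on_sum continuous_on_mult continuous_on_component continuous_on_id continuous_on_const)

lemma cont_mm: "continuous_on UNIV (\<lambda>T::real^'n^'n. S ** T)"
  unfolding matrix_matrix_mult_def
  by (intro continuous_on_vec_lambda continuous_on_sum continuous_on_mult continuous_on_component continuous_on_id continuous_on_const)

lemma vec_expand: "(x::real^'n) = (\<Sum>i\<in>UNIV. x$i *\<^sub>R axis i 1)"
  by (simp add: vec_eq_iff sum_component axis_def if_distrib[of "\<lambda>t. _ * t"] cong: if_cong)

locale haar_ctx =
  fixes \<Omega> :: "(real^'n) set" and \<mu> :: "(real^'n^'n) measure"
  assumes ss: "state_space \<Omega>" and hg: "haar_GL \<Omega> \<mu>"
begin

abbreviation "GL \<equiv> GL_state \<Omega>"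

lemma sets_mu: "sets \<mu> = sets borel" using hg unfolding haar_GL_def by blast
lemma space_mu: "space \<mu> = UNIV" using sets_eq_imp_space_eq[OF sets_mu] by simp
lemma prob: "prob_space \<mu>" using hg unfolding haar_GL_def by blast
lemma inv_mu: "S \<in> GL \<Longrightarrow> distr \<mu> borel (\<lambda>T. S ** T) = \<mu>" using hg unfolding haar_GL_def by blast
lemma emeasure_GL: "emeasure \<mu> GL = 1" using hg unfolding haar_GL_def by blast
lemma GL_sets: "GL \<in> sets \<mu>" using hg unfolding haar_GL_def by blast

lemma AE_GL: "AE T in \<mu>. T \<in> GL"
proof -
  have "measure \<mu> GL = 1" using emeasure_GL by (simp add: measure_def)
  then show ?thesis using prob_space.AE_prob_1[OF prob] by blast
qed

lemma meas_cont: "continuous_on UNIV f \<Longrightarrow> f \<in> borel_measurable \<mu>"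
  using measurable_cong_sets[OF sets_mu refl] borel_measurable_continuous_onI by blast

lemma integrable_bdd:
  fixes f :: "real^'n^'n \<Rightarrow> real"
  assumes "continuous_on UNIV f" "\<And>T. T \<in> GL \<Longrightarrow> \<bar>f T\<bar> \<le> C"
  shows "integrable \<mu> f"
proof -
  interpret prob_space \<mu> by (rule prob)
  show ?thesis
    by (rule integrable_const_bound[where B=C]) (use AE_GL assms meas_cont in auto)
qed

lemma integral_inv:
  fixes f :: "real^'n^'n \<Rightarrow> real"
  assumes "S \<in> GL" "continuous_on UNIV f"
  shows "(\<integral>T. f (S ** T) \<partial>\<mu>) = (\<integral>T. f T \<partial>\<mu>)"
proof -
  have m: "(\<lambda>T. S ** T) \<in> measurable \<mu> borel" using meas_cont[OF cont_mm] .
  have "(\<integral>T. f (S ** T) \<partial>\<mu>) = integral\<^sup>L (distr \<mu> borel (\<lambda>T. S ** T)) f"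
    by (rule integral_distr[symmetric, OF m]) (rule borel_measurable_continuous_onI[OF assms(2)])
  also have "\<dots> = (\<integral>T. f T \<partial>\<mu>)" using inv_mu[OF assms(1)] by simp
  finally show ?thesis .
qed

lemma g_cont: "continuous_on UNIV (\<lambda>T::real^'n^'n. (T *v x) \<bullet> (T *v y))"
  by (intro continuous_on_inner cont_mv)

lemma g_int: "integrable \<mu> (\<lambda>T. (T *v x) \<bullet> (T *v y))"
proof -
  obtain Cx where Cx: "\<And>T. T \<in> GL \<Longrightarrow> norm (T *v x) \<le> Cx" using GL_bound[OF ss] by blast
  obtain Cy where Cy: "\<And>T. T \<in> GL \<Longrightarrow> norm (T *v y) \<le> Cy" using GL_bound[OF ss] by blast
  show ?thesis
  proof (rule integrable_bdd[OF g_cont])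
    fix T assume T: "T \<in> GL"
    have "\<bar>(T *v x) \<bullet> (T *v y)\<bar> \<le> norm (T *v x) * norm (T *v y)" by (rule Cauchy_Schwarz_ineq2)
    also have "\<dots> \<le> Cx * Cy" using Cx[OF T] Cy[OF T] by (intro mult_mono) (auto intro: order_trans[OF norm_ge_zero])
    finally show "\<bar>(T *v x) \<bullet> (T *v y)\<bar> \<le> Cx * Cy" .
  qed
qed

lemma GLi_sym: "GL_inner \<mu> x y = GL_inner \<mu> y x"
  unfolding GL_inner_def by (simp add: inner_commute)

lemma GLi_linear: "linear (\<lambda>x. GL_inner \<mu> x y)"
proof (rule linearI)
  fix a b
  show "GL_inner \<mu> (a + b) y = GL_inner \<mu> a y + GL_inner \<mu> b y"
    unfolding GL_inner_def using g_int[of a y] g_int[of b y]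
    by (simp add: matrix_vector_right_distrib inner_add_left)
next
  fix c a
  show "GL_inner \<mu> (c *\<^sub>R a) y = c *\<^sub>R GL_inner \<mu> a y"
    unfolding GL_inner_def by (simp add: matrix_vector_mult_scaleR)
qed

definition Mm :: "real^'n^'n" where "Mm = (\<chi> i j. GL_inner \<mu> (axis i 1) (axis j 1))"

lemma GLi_Mm: "GL_inner \<mu> x y = x \<bullet> (Mm *v y)"
proof -
  have "GL_inner \<mu> x y = GL_inner \<mu> (\<Sum>i\<in>UNIV. x$i *\<^sub>R axis i 1) y" using vec_expand[of x] by simp
  also have "\<dots> = (\<Sum>i\<in>UNIV. x$i * GL_inner \<mu> (axis i 1) y)"
    using linear_sum[OF GLi_linear, of "\<lambda>i. x$i *\<^sub>R axis i 1" UNIV y] linear_scale[OF GLi_linear]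
    by simp
  also have "\<dots> = (\<Sum>i\<in>UNIV. x$i * (\<Sum>j\<in>UNIV. y$j * GL_inner \<mu> (axis i 1) (axis j 1)))"
  proof -
    have "GL_inner \<mu> (axis i 1) y = (\<Sum>j\<in>UNIV. y$j * GL_inner \<mu> (axis i 1) (axis j 1))" for i
    proof -
      have "GL_inner \<mu> (axis i 1) y = GL_inner \<mu> y (axis i 1)" by (rule GLi_sym)
      also have "\<dots> = GL_inner \<mu> (\<Sum>j\<in>UNIV. y$j *\<^sub>R axis j 1) (axis i 1)" using vec_expand[of y] by simp
      also have "\<dots> = (\<Sum>j\<in>UNIV. y$j * GL_inner \<mu> (axis j 1) (axis i 1))"
        using linear_sum[OF GLi_linear, of "\<lambda>j. y$j *\<^sub>R axis j 1" UNIV "axis i 1"] linear_scale[OF GLi_linear]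
        by simp
      finally show ?thesis by (simp add: GLi_sym)
    qed
    then show ?thesis by simp
  qed
  also have "\<dots> = x \<bullet> (Mm *v y)"
    by (simp add: inner_vec_def matrix_vector_mult_def Mm_def mult.commute)
  finally show ?thesis .
qed

lemma Mm_sym: "x \<bullet> (Mm *v y) = y \<bullet> (Mm *v x)"
  using GLi_Mm GLi_sym by metis

lemma GLi_nonneg: "GL_inner \<mu> x x \<ge> 0"
  unfolding GL_inner_def by (rule Bochner_Integration.integral_nonneg) simp

lemma GLi_pos:
  assumes "x \<noteq> 0" shows "GL_inner \<mu> x x > 0"
proof (rule ccontr)
  assume "\<not> GL_inner \<mu> x x > 0"
  then have "(\<integral>T. (T *v x) \<bullet> (T *v x) \<partial>\<mu>) = 0" using GLi_nonneg[of x] unfolding GL_inner_def by linarith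
  then have "AE T in \<mu>. (T *v x) \<bullet> (T *v x) = 0"
    using integral_nonneg_eq_0_iff_AE[OF g_int] by simp
  then have "AE T in \<mu>. False"
    using AE_GL
  proof eventually_elim
    case (elim T)
    then obtain T' where "T' ** T = mat 1" unfolding GL_state_def invertible_def by blast
    moreover have "T *v x = 0" using elim by simp
    ultimately have "x = 0" by (metis matrix_vector_mul_assoc matrix_vector_mul_lid matrix_vector_mult_0_right)
    then show False using assms by simp
  qed
  then show False using prob_space.AE_False[OF prob] by simp
qed

end


context haar_ctx begin

definition ginv :: "real^'n^'n \<Rightarrow> real^'n^'n" where
  "ginv Q = (SOME Q'. Q' \<in> GL \<and> Q ** Q' = mat 1 \<and> Q' ** Q = mat 1)"

lemma ginv: assumes "Q \<in> GL" shows "ginv Q \<in> GL" "Q ** ginv Q = mat 1" "ginv Q ** Q = mat 1"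
proof -
  have "\<exists>Q'. Q' \<in> GL \<and> Q ** Q' = mat 1 \<and> Q' ** Q = mat 1" using GL_inv[OF assms] by metis
  from someI_ex[OF this] show "ginv Q \<in> GL" "Q ** ginv Q = mat 1" "ginv Q ** Q = mat 1"
    unfolding ginv_def by auto
qed

lemma full_support:
  assumes U: "open U" and U0: "emeasure \<mu> U = 0"
  shows "U \<inter> GL = {}"
proof (rule ccontr)
  assume "U \<inter> GL \<noteq> {}"
  then obtain P where P: "P \<in> U" "P \<in> GL" by blast
  define V where "V Q = (\<lambda>T. (P ** ginv Q) ** T) -` U" for Q
  have openV: "open (V Q)" for Q
    unfolding V_def by (rule continuous_open_vimage[OF U]) (use cont_mm in \<open>auto simp: continuous_on_eq_continuous_at\<close>)
  have cov: "GL \<subseteq> (\<Union>Q\<in>GL. V Q)"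
  proof
    fix Q assume Q: "Q \<in> GL"
    have "(P ** ginv Q) ** Q = P" using ginv[OF Q] by (simp add: matrix_mul_assoc[symmetric])
    then have "Q \<in> V Q" unfolding V_def using P by simp
    then show "Q \<in> (\<Union>Q\<in>GL. V Q)" using Q by blast
  qed
  have V0: "emeasure \<mu> (V Q) = 0" if Q: "Q \<in> GL" for Q
  proof -
    have S: "P ** ginv Q \<in> GL" using GL_mult[OF P(2) ginv(1)[OF Q]] .
    have m: "(\<lambda>T. (P ** ginv Q) ** T) \<in> measurable \<mu> borel" using meas_cont[OF cont_mm] .
    have "emeasure (distr \<mu> borel (\<lambda>T. (P ** ginv Q) ** T)) U = emeasure \<mu> (V Q)"
      using emeasure_distr[OF m, of U] U unfolding V_def space_mu by simp
    then show ?thesis using inv_mu[OF S] U0 by simp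
  qed
  obtain C' where C': "C' \<subseteq> GL" "finite C'" "GL \<subseteq> (\<Union>c\<in>C'. V c)"
    using compactE_image[OF GL_compact[OF ss] openV cov] by metis
  have "emeasure \<mu> GL \<le> emeasure \<mu> (\<Union>c\<in>C'. V c)"
  proof (rule emeasure_mono[OF C'(3)])
    have "open (\<Union>c\<in>C'. V c)" using openV by auto
    then show "(\<Union>c\<in>C'. V c) \<in> sets \<mu>" using sets_mu by simp
  qed
  also have "\<dots> \<le> (\<Sum>c\<in>C'. emeasure \<mu> (V c))"
    by (rule emeasure_subadditive_finite[OF C'(2)]) (use openV sets_mu in \<open>auto\<close>)
  also have "\<dots> = 0" using V0 C'(1) by (auto intro: sum.neutral)
  finally show False using emeasure_GL by simp
qed

abbreviation "Qf z \<equiv> GL_inner \<mu> z z"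

lemma Qf_cont: "continuous_on UNIV (\<lambda>R::real^'n^'n. Qf (R *v y))"
  unfolding GLi_Mm by (intro continuous_on_inner cont_mv continuous_intros)
    (simp add: matrix_vector_mult_def continuous_on_vec_lambda continuous_on_sum continuous_on_mult continuous_on_component continuous_on_const cont_mv)

lemma fubini_step: "(\<integral>R. Qf (R *v y) \<partial>\<mu>) = Qf y"
proof -
  interpret P: pair_sigma_finite \<mu> \<mu>
    unfolding pair_sigma_finite_def using prob_space_imp_sigma_finite[OF prob] by simp
  interpret PP: prob_space "\<mu> \<Otimes>\<^sub>M \<mu>" by (rule prob_space_pair[OF prob prob])
  define f where "f R T = ((T ** R) *v y) \<bullet> ((T ** R) *v y)" for R T :: "real^'n^'n"
  obtain C where C: "\<And>T. T \<in> GL \<Longrightarrow> norm (T *v y) \<le> C" using GL_bound[OF ss] by blast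
  have sp: "sets (\<mu> \<Otimes>\<^sub>M \<mu>) = sets (borel :: ((real^'n^'n) \<times> (real^'n^'n)) measure)"
    using sets_pair_measure_cong[OF sets_mu sets_mu] borel_prod by metis
  have cf: "continuous_on UNIV (case_prod f)"
    unfolding f_def case_prod_beta matrix_matrix_mult_def matrix_vector_mult_def
    by (intro continuous_intros)
  have mf: "case_prod f \<in> borel_measurable (\<mu> \<Otimes>\<^sub>M \<mu>)"
    using measurable_cong_sets[OF sp refl] borel_measurable_continuous_onI[OF cf] by blast
  have AEp: "AE p in \<mu> \<Otimes>\<^sub>M \<mu>. fst p \<in> GL \<and> snd p \<in> GL"
  proof (rule P.AE_pair_measure)
    have "{x \<in> space (\<mu> \<Otimes>\<^sub>M \<mu>). fst x \<in> GL \<and> snd x \<in> GL} = GL \<times> GL"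
      by (auto simp: space_pair_measure space_mu)
    then show "{x \<in> space (\<mu> \<Otimes>\<^sub>M \<mu>). fst x \<in> GL \<and> snd x \<in> GL} \<in> sets (\<mu> \<Otimes>\<^sub>M \<mu>)"
      using GL_sets by auto
    show "AE x in \<mu>. AE y in \<mu>. fst (x, y) \<in> GL \<and> snd (x, y) \<in> GL"
      using AE_GL by eventually_elim (use AE_GL in auto)
  qed
  have intf: "integrable (\<mu> \<Otimes>\<^sub>M \<mu>) (case_prod f)"
  proof (rule PP.integrable_const_bound[where B="C*C"])
    show "AE x in \<mu> \<Otimes>\<^sub>M \<mu>. norm (case_prod f x) \<le> C * C"
      using AEp
    proof eventually_elim
      case (elim p)
      then have "snd p ** fst p \<in> GL" by (simp add: GL_mult)
      then have n: "norm ((snd p ** fst p) *v y) \<le> C" by (rule C)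
      have "\<bar>f (fst p) (snd p)\<bar> = norm ((snd p ** fst p) *v y) * norm ((snd p ** fst p) *v y)"
        unfolding f_def by (simp add: power2_eq_square[symmetric] power2_norm_eq_inner[symmetric])
      also have "\<dots> \<le> C * C" using n by (intro mult_mono) (auto intro: order_trans[OF norm_ge_zero])
      finally show ?case by (simp add: case_prod_beta)
    qed
  qed (rule mf)
  have "(\<integral>T. (\<integral>R. f R T \<partial>\<mu>) \<partial>\<mu>) = (\<integral>R. (\<integral>T. f R T \<partial>\<mu>) \<partial>\<mu>)"
    by (rule P.Fubini_integral[OF intf])
  moreover have "(\<integral>T. f R T \<partial>\<mu>) = Qf (R *v y)" for R
    unfolding f_def GL_inner_def by (simp add: matrix_vector_mul_assoc)
  moreover have "(\<integral>T. (\<integral>R. f R T \<partial>\<mu>) \<partial>\<mu>) = (\<integral>T. Qf y \<partial>\<mu>)"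
  proof (rule integral_cong_AE)
    show "(\<lambda>T. \<integral>R. f R T \<partial>\<mu>) \<in> borel_measurable \<mu>"
    proof -
      have cf2: "continuous_on UNIV (case_prod (\<lambda>T R. f R T))"
        unfolding f_def case_prod_beta matrix_matrix_mult_def matrix_vector_mult_def
        by (intro continuous_intros)
      have "case_prod (\<lambda>T R. f R T) \<in> borel_measurable (\<mu> \<Otimes>\<^sub>M \<mu>)"
        using measurable_cong_sets[OF sp refl] borel_measurable_continuous_onI[OF cf2] by blast
      then show ?thesis by (rule P.M1.borel_measurable_lebesgue_integral)
    qed
    show "(\<lambda>T. Qf y) \<in> borel_measurable \<mu>" by simp
    show "AE T in \<mu>. (\<integral>R. f R T \<partial>\<mu>) = Qf y"
      using AE_GL
    proof eventually_elim
      case (elim T)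
      have "(\<integral>R. f R T \<partial>\<mu>) = (\<integral>R. (\<lambda>S. (S *v y) \<bullet> (S *v y)) (T ** R) \<partial>\<mu>)"
        unfolding f_def by simp
      also have "\<dots> = (\<integral>R. (R *v y) \<bullet> (R *v y) \<partial>\<mu>)"
        by (rule integral_inv[OF elim g_cont])
      finally show ?case unfolding GL_inner_def .
    qed
  qed
  moreover have "(\<integral>T. Qf y \<partial>\<mu>) = Qf y" using prob_space.prob_space[OF prob] by simp
  ultimately show ?thesis by simp
qed

end


context haar_ctx begin

lemma Q_inv:
  assumes S: "S \<in> GL" shows "Qf (S *v y) = Qf y"
proof -
  have ne: "GL \<noteq> {}" using GL_one by blast
  obtain R0 where R0: "R0 \<in> GL" and mx: "\<And>R. R \<in> GL \<Longrightarrow> Qf (R *v y) \<le> Qf (R0 *v y)"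
    using continuous_attains_sup[OF GL_compact[OF ss] ne continuous_on_subset[OF Qf_cont[of y]]] by auto
  define ys where "ys = R0 *v y"
  define m where "m = Qf ys"
  have bnd: "Qf (R *v ys) \<le> m" if "R \<in> GL" for R
    using mx[OF GL_mult[OF that R0]] unfolding ys_def m_def by (simp add: matrix_vector_mul_assoc)
  have int: "integrable \<mu> (\<lambda>R. Qf (R *v ys))"
  proof (rule integrable_bdd[OF Qf_cont])
    fix R assume "R \<in> GL"
    then show "\<bar>Qf (R *v ys)\<bar> \<le> m" using bnd GLi_nonneg by auto
  qed
  interpret prob_space \<mu> by (rule prob)
  have int2: "integrable \<mu> (\<lambda>R. m - Qf (R *v ys))" using int by simp
  have "(\<integral>R. m - Qf (R *v ys) \<partial>\<mu>) = m - (\<integral>R. Qf (R *v ys) \<partial>\<mu>)"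
    using int by (simp add: prob_space)
  also have "\<dots> = 0" using fubini_step[of ys] m_def by simp
  finally have "(\<integral>R. m - Qf (R *v ys) \<partial>\<mu>) = 0" .
  moreover have "AE R in \<mu>. 0 \<le> m - Qf (R *v ys)" using AE_GL by eventually_elim (use bnd in auto)
  ultimately have ae: "AE R in \<mu>. m - Qf (R *v ys) = 0"
    using integral_nonneg_eq_0_iff_AE[OF int2] by simp
  define U where "U = {R. Qf (R *v ys) < m}"
  have oU: "open U" unfolding U_def by (rule open_Collect_less[OF Qf_cont continuous_on_const])
  have "U \<in> sets \<mu>" using oU sets_mu by simp
  moreover have "{x \<in> space \<mu>. \<not> \<not> Qf (x *v ys) < m} = U" unfolding U_def space_mu by simp
  ultimately have "(AE R in \<mu>. \<not> Qf (R *v ys) < m) \<longleftrightarrow> emeasure \<mu> U = 0"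
    by (rule AE_iff_measurable)
  moreover have "AE R in \<mu>. \<not> Qf (R *v ys) < m" using ae by eventually_elim simp
  ultimately have "emeasure \<mu> U = 0" by simp
  then have UG: "U \<inter> GL = {}" by (rule full_support[OF oU])
  have key: "Qf (T *v y) = m" if T: "T \<in> GL" for T
  proof -
    have R1: "T ** ginv R0 \<in> GL" using GL_mult[OF T ginv(1)[OF R0]] .
    have "(T ** ginv R0) *v ys = T *v y"
      unfolding ys_def using ginv(3)[OF R0]
      by (metis matrix_mul_assoc matrix_mul_rid matrix_vector_mul_assoc)
    then have "\<not> Qf (T *v y) < m" using UG R1 unfolding U_def by (metis (mono_tags, lifting) IntI empty_iff mem_Collect_eq)
    moreover have "Qf (T *v y) \<le> m" using mx[OF T] unfolding m_def ys_def .
    ultimately show ?thesis by simp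
  qed
  show ?thesis using key[OF S] key[OF GL_one] by simp
qed

end


locale gpt = haar_ctx \<Omega> \<mu> for \<Omega> :: "(real^'n) set" and \<mu> :: "(real^'n^'n) measure" +
  assumes tr: "transitive_state_space \<Omega>"
    and sd: "positive_cone \<Omega> = {y. \<forall>x\<in>positive_cone \<Omega>. GL_inner \<mu> x y \<ge> 0}"
begin

abbreviation "uu \<equiv> unit_effect \<Omega>"
abbreviation "Vp \<equiv> positive_cone \<Omega>"
abbreviation "ip \<equiv> GL_inner \<mu>"

lemma uu_w: "w \<in> \<Omega> \<Longrightarrow> uu \<bullet> w = 1" by (rule unit_effect_prop[OF ss])

lemma Mm_inj: "Mm *v v = 0 \<Longrightarrow> v = 0"
  using GLi_pos[of v] GLi_Mm[of v v] by auto

lemma Mm_surj: "\<exists>v. (Mm::real^'n^'n) *v v = e"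
proof -
  have "inj ((*v) Mm)"
    by (rule injI) (metis Mm_inj eq_iff_diff_eq_0 matrix_vector_mult_diff_distrib)
  then have "surj ((*v) Mm)" using linear_injective_imp_surjective[OF matrix_vector_mul_linear] by blast
  then show ?thesis by (metis surjD)
qed

definition hat :: "real^'n \<Rightarrow> real^'n" where "hat e = (SOME v. (Mm::real^'n^'n) *v v = e)"

lemma hat_prop: "Mm *v hat e = e"
  unfolding hat_def using someI_ex[OF Mm_surj] .

lemma hat_eq: "Mm *v v = e \<Longrightarrow> hat e = v"
  using hat_prop[of e] Mm_inj[of "hat e - v"] by (simp add: matrix_vector_mult_diff_distrib)

lemma hat_add: "hat (a + b) = hat a + hat b"
  by (rule hat_eq) (simp add: matrix_vector_right_distrib hat_prop)
lemma hat_diff: "hat (a - b) = hat a - hat b"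
  by (rule hat_eq) (simp add: matrix_vector_mult_diff_distrib hat_prop)
lemma hat_zero: "hat 0 = 0"
  by (rule hat_eq) simp
lemma hat_scale: "hat (c *\<^sub>R a) = c *\<^sub>R hat a"
  by (rule hat_eq) (simp add: matrix_vector_mult_scaleR hat_prop)

lemma ip_hat: "ip x (hat e) = x \<bullet> e" by (simp add: GLi_Mm hat_prop)
lemma ip_hat2: "ip (hat e) x = x \<bullet> e" using ip_hat GLi_sym by metis

lemma ip_scale_left: "ip (c *\<^sub>R x) y = c * ip x y"
  by (simp add: GLi_Mm)
lemma ip_scale_right: "ip x (c *\<^sub>R y) = c * ip x y"
  by (simp add: GLi_Mm matrix_vector_mult_scaleR)

lemma cone_mem: "c \<ge> 0 \<Longrightarrow> w \<in> \<Omega> \<Longrightarrow> c *\<^sub>R w \<in> Vp"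
  unfolding positive_cone_def by blast

lemma cone_E: assumes "y \<in> Vp" obtains c w where "c \<ge> 0" "w \<in> \<Omega>" "y = c *\<^sub>R w"
  using assms unfolding positive_cone_def by blast

lemma cone_uu: assumes "y \<in> Vp" "y = c *\<^sub>R w" "w \<in> \<Omega>" shows "uu \<bullet> y = c"
  using assms uu_w by simp

lemma cone_ip: "x \<in> Vp \<Longrightarrow> y \<in> Vp \<Longrightarrow> ip x y \<ge> 0"
  using sd by blast

lemma cone_I: assumes "\<And>w. w \<in> \<Omega> \<Longrightarrow> ip w y \<ge> 0" shows "y \<in> Vp"
proof -
  have "\<forall>x\<in>Vp. ip x y \<ge> 0"
  proof
    fix x assume "x \<in> Vp"
    then obtain c w where "c \<ge> 0" "w \<in> \<Omega>" "x = c *\<^sub>R w" by (rule cone_E)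
    then show "ip x y \<ge> 0" using assms by (simp add: ip_scale_left)
  qed
  then show ?thesis using sd by blast
qed

lemma state_cone: "w \<in> \<Omega> \<Longrightarrow> w \<in> Vp" using cone_mem[of 1 w] by simp

lemma hat_eff: "e \<in> effects \<Omega> \<Longrightarrow> hat e \<in> Vp"
  by (rule cone_I) (auto simp: ip_hat effects_def inner_commute)

lemma Q_ext_eq:
  assumes "w1 extreme_point_of \<Omega>" "w2 extreme_point_of \<Omega>" shows "Qf w1 = Qf w2"
proof -
  obtain T where T: "T \<in> GL" "T *v w1 = w2" using tr assms unfolding transitive_state_space_def by blast
  have "Qf (T *v w1) = Qf w1" by (rule Q_inv[OF T(1)])
  then show ?thesis using T(2) by simp
qed

lemma ip_expand: "ip (x - y) (x - y) = Qf x - 2 * ip x y + Qf y"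
  unfolding GLi_Mm using Mm_sym[of x y]
  by (simp add: matrix_vector_mult_diff_distrib inner_diff_left inner_diff_right)

lemma ip_le:
  assumes w0: "w0 extreme_point_of \<Omega>" and w: "w \<in> \<Omega>" shows "ip w0 w \<le> Qf w0"
proof -
  have cc: "compact \<Omega>" "convex \<Omega>" using ss unfolding state_space_def by auto
  have KM: "\<Omega> = convex hull {x. x extreme_point_of \<Omega>}" by (rule Krein_Milman_Minkowski[OF cc])
  define f where "f x = x \<bullet> (Mm *v w0)" for x
  have fe: "f x = ip w0 x" for x unfolding f_def by (subst GLi_sym) (rule GLi_Mm[symmetric])
  have "convex_on (convex hull {x. x extreme_point_of \<Omega>}) f"
    unfolding convex_on_def f_def by (simp add: inner_add_left)
  moreover have "\<forall>x\<in>{x. x extreme_point_of \<Omega>}. f x \<le> Qf w0"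
  proof
    fix x assume "x \<in> {x. x extreme_point_of \<Omega>}"
    then have "Qf x = Qf w0" using w0 by (intro Q_ext_eq) auto
    moreover have "ip (w0 - x) (w0 - x) \<ge> 0" by (rule GLi_nonneg)
    moreover have "ip (w0 - x) (w0 - x) = Qf w0 - 2 * ip w0 x + Qf x" by (rule ip_expand)
    ultimately show "f x \<le> Qf w0" unfolding fe by linarith
  qed
  ultimately have "\<forall>x\<in>convex hull {x. x extreme_point_of \<Omega>}. f x \<le> Qf w0"
    by (rule convex_on_convex_hull_bound)
  moreover have "w \<in> convex hull {x. x extreme_point_of \<Omega>}" using subsetD[OF equalityD1[OF KM] w] .
  ultimately have "f w \<le> Qf w0" by blast
  then show ?thesis unfolding fe .
qed

end


lemma sl_inner: "sum_list es \<bullet> (w::real^'n) = sum_list (map (\<lambda>e. e \<bullet> w) es)"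
  by (induction es) (auto simp: inner_add_left)

lemma sl_ge: "(x::real) \<in> set xs \<Longrightarrow> (\<forall>y\<in>set xs. 0 \<le> y) \<Longrightarrow> x \<le> sum_list xs"
proof (induction xs)
  case Nil then show ?case by simp
next
  case (Cons a xs)
  have "0 \<le> sum_list xs" using Cons.prems by (intro sum_list_nonneg) auto
  then show ?case using Cons by auto
qed

context gpt begin

lemma eff_nonneg: "e \<in> effects \<Omega> \<Longrightarrow> w \<in> \<Omega> \<Longrightarrow> 0 \<le> e \<bullet> w" unfolding effects_def by blast
lemma eff_le1: "e \<in> effects \<Omega> \<Longrightarrow> w \<in> \<Omega> \<Longrightarrow> e \<bullet> w \<le> 1" unfolding effects_def by blast

lemma w_ne0: "w \<in> \<Omega> \<Longrightarrow> w \<noteq> 0" using uu_w[of w] by auto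

lemma indec_part:
  assumes ind: "indecomposable_effect \<Omega> e" and a: "a \<in> \<Omega>" and b: "b \<in> \<Omega>"
    and s: "s > 0" and r: "r \<ge> 0" and he: "hat e = s *\<^sub>R a + r *\<^sub>R b"
    and hw: "hat e = c *\<^sub>R w" and w: "w \<in> \<Omega>"
  shows "a = w"
proof -
  have eff: "e \<in> effects \<Omega>" using ind unfolding indecomposable_effect_def by blast
  define e1 where "e1 = Mm *v (s *\<^sub>R a)"
  define e2 where "e2 = Mm *v (r *\<^sub>R b)"
  have esum: "e = e1 + e2" unfolding e1_def e2_def using hat_prop[of e] he
    by (simp add: matrix_vector_right_distrib)
  have e1v: "e1 \<bullet> x = s * ip x a" for x
    unfolding e1_def by (simp add: GLi_Mm inner_commute matrix_vector_mult_scaleR)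
  have e2v: "e2 \<bullet> x = r * ip x b" for x
    unfolding e2_def by (simp add: GLi_Mm inner_commute matrix_vector_mult_scaleR)
  have ipa: "ip x a \<ge> 0" if "x \<in> \<Omega>" for x using cone_ip[OF state_cone[OF that] state_cone[OF a]] .
  have ipb: "ip x b \<ge> 0" if "x \<in> \<Omega>" for x using cone_ip[OF state_cone[OF that] state_cone[OF b]] .
  have ev: "e \<bullet> x = e1 \<bullet> x + e2 \<bullet> x" for x using esum by (simp add: inner_add_left)
  have "e1 \<in> effects \<Omega>" unfolding effects_def
  proof (intro CollectI ballI conjI)
    fix x assume x: "x \<in> \<Omega>"
    show "0 \<le> e1 \<bullet> x" using e1v ipa[OF x] s by simp
    show "e1 \<bullet> x \<le> 1" using ev[of x] e2v[of x] ipb[OF x] r eff_le1[OF eff x]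
      by (smt (verit) mult_nonneg_nonneg)
  qed
  moreover have "e2 \<in> effects \<Omega>" unfolding effects_def
  proof (intro CollectI ballI conjI)
    fix x assume x: "x \<in> \<Omega>"
    show "0 \<le> e2 \<bullet> x" using e2v ipb[OF x] r by simp
    show "e2 \<bullet> x \<le> 1" using ev[of x] e1v[of x] ipa[OF x] s eff_le1[OF eff x]
      by (smt (verit) mult_nonneg_nonneg)
  qed
  ultimately obtain k where k: "e1 = k *\<^sub>R e" using ind esum unfolding indecomposable_effect_def by blast
  have eM: "e = c *\<^sub>R (Mm *v w)" using hat_prop[of e] hw by (simp add: matrix_vector_mult_scaleR)
  have "Mm *v (s *\<^sub>R a) = e1" unfolding e1_def ..
  also have "\<dots> = (k * c) *\<^sub>R (Mm *v w)" using k eM by simp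
  also have "\<dots> = Mm *v ((k * c) *\<^sub>R w)" by (simp add: matrix_vector_mult_scaleR)
  finally have "Mm *v (s *\<^sub>R a) = Mm *v ((k * c) *\<^sub>R w)" .
  then have "s *\<^sub>R a = (k * c) *\<^sub>R w"
    using Mm_inj[of "s *\<^sub>R a - (k * c) *\<^sub>R w"] by (simp add: matrix_vector_mult_diff_distrib)
  moreover then have "s = k * c"
  proof -
    assume h: "s *\<^sub>R a = (k * c) *\<^sub>R w"
    have "uu \<bullet> (s *\<^sub>R a) = uu \<bullet> ((k * c) *\<^sub>R w)" using h by simp
    then show ?thesis using uu_w[OF a] uu_w[OF w] by simp
  qed
  ultimately show "a = w" using s by auto
qed

lemma pure_ind:
  assumes pu: "pure_effect \<Omega> e" and ind: "indecomposable_effect \<Omega> e"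
  obtains c w where "c > 0" "w \<in> \<Omega>" "hat e = c *\<^sub>R w" "e \<bullet> w = 1"
proof -
  have eff: "e \<in> effects \<Omega>" using ind unfolding indecomposable_effect_def by blast
  have ne: "e \<noteq> 0" using ind unfolding indecomposable_effect_def by blast
  obtain c w where c: "c \<ge> 0" and w: "w \<in> \<Omega>" and hw: "hat e = c *\<^sub>R w"
    using hat_eff[OF eff] by (rule cone_E)
  have "c \<noteq> 0"
  proof
    assume "c = 0"
    then have "hat e = 0" using hw by simp
    then show False using hat_prop[of e] ne by simp
  qed
  with c have cpos: "c > 0" by simp
  have ext: "w extreme_point_of \<Omega>"
    unfolding extreme_point_of_def
  proof (intro conjI ballI w notI)
    fix a b assume a: "a \<in> \<Omega>" and b: "b \<in> \<Omega>" and seg: "w \<in> open_segment a b"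
    then obtain t where ab: "a \<noteq> b" and t: "0 < t" "t < 1" and wt: "w = (1 - t) *\<^sub>R a + t *\<^sub>R b"
      unfolding in_segment by blast
    have h1: "hat e = (c * (1 - t)) *\<^sub>R a + (c * t) *\<^sub>R b" using hw wt by (simp add: scaleR_add_right)
    have "a = w" by (rule indec_part[OF ind a b _ _ h1 hw w]) (use cpos t in auto)
    moreover have "b = w" by (rule indec_part[OF ind b a _ _ _ hw w, of "c * t" "c * (1 - t)"])
      (use cpos t h1 in \<open>auto simp: add.commute\<close>)
    ultimately show False using ab by simp
  qed
  have ev: "e \<bullet> x = c * ip w x" for x
  proof -
    have "e \<bullet> x = x \<bullet> e" by (simp add: inner_commute)
    also have "\<dots> = ip x (hat e)" by (simp add: ip_hat)
    also have "\<dots> = c * ip x w" using hw by (simp add: ip_scale_right)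
    finally show ?thesis by (simp add: GLi_sym)
  qed
  define mx where "mx = e \<bullet> w"
  have mxpos: "mx > 0" unfolding mx_def ev using cpos GLi_pos[OF w_ne0[OF w]] by simp
  have bnd: "e \<bullet> x \<le> mx" if "x \<in> \<Omega>" for x
    unfolding mx_def ev using ip_le[OF ext that] cpos by (simp add: mult_left_mono)
  have mx1: "mx \<le> 1" unfolding mx_def by (rule eff_le1[OF eff w])
  have "mx = 1"
  proof (rule ccontr)
    assume "mx \<noteq> 1"
    with mx1 have mxl: "mx < 1" by simp
    have "0 \<in> effects \<Omega>" unfolding effects_def by simp
    moreover have "(1/mx) *\<^sub>R e \<in> effects \<Omega>" unfolding effects_def
    proof (intro CollectI ballI conjI)
      fix x assume x: "x \<in> \<Omega>"
      show "0 \<le> ((1/mx) *\<^sub>R e) \<bullet> x" using eff_nonneg[OF eff x] mxpos by simp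
      show "((1/mx) *\<^sub>R e) \<bullet> x \<le> 1" using bnd[OF x] mxpos by (simp add: divide_le_eq_1)
    qed
    moreover have "e \<in> open_segment 0 ((1/mx) *\<^sub>R e)"
      unfolding in_segment
    proof (intro conjI exI[of _ mx])
      show "0 \<noteq> (1/mx) *\<^sub>R e" using ne mxpos by simp
      show "e = (1 - mx) *\<^sub>R 0 + mx *\<^sub>R (1/mx) *\<^sub>R e" using mxpos by simp
    qed (use mxpos mxl in auto)
    ultimately show False using pu unfolding pure_effect_def extreme_point_of_def by blast
  qed
  then show ?thesis using that cpos w hw unfolding mx_def by blast
qed

end


context gpt begin

definition DEC :: "real^'n \<Rightarrow> bool" where
  "DEC e \<longleftrightarrow> (\<exists>ps. (\<forall>p\<in>set ps. fst p \<ge> 0 \<and> snd p \<in> \<Omega> \<and> e \<bullet> snd p = 1) \<and>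
       hat e = sum_list (map (\<lambda>p. fst p *\<^sub>R snd p) ps))"

lemma hat_sum_list: "hat (sum_list es) = sum_list (map hat es)"
  by (induction es) (auto simp: hat_zero hat_add)

lemma list_dec:
  assumes "\<forall>e\<in>set es. pure_effect \<Omega> e \<and> indecomposable_effect \<Omega> e"
  shows "\<exists>ps. (\<forall>p\<in>set ps. fst p \<ge> 0 \<and> snd p \<in> \<Omega> \<and> (\<exists>e\<in>set es. e \<bullet> snd p = 1)) \<and>
       hat (sum_list es) = sum_list (map (\<lambda>p. fst p *\<^sub>R snd p) ps)"
  using assms
proof (induction es)
  case Nil then show ?case by (intro exI[of _ "[]"]) (simp add: hat_zero)
next
  case (Cons e es)
  then obtain ps where ps: "\<forall>p\<in>set ps. fst p \<ge> 0 \<and> snd p \<in> \<Omega> \<and> (\<exists>e\<in>set es. e \<bullet> snd p = 1)"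
    and hps: "hat (sum_list es) = sum_list (map (\<lambda>p. fst p *\<^sub>R snd p) ps)" by auto
  obtain c w where "c > 0" "w \<in> \<Omega>" "hat e = c *\<^sub>R w" "e \<bullet> w = 1"
    using pure_ind Cons.prems by auto
  then show ?case using ps hps
    by (intro exI[of _ "(c, w) # ps"]) (auto simp: hat_add)
qed

lemma DEC_sum:
  assumes es: "\<forall>e\<in>set es. pure_effect \<Omega> e \<and> indecomposable_effect \<Omega> e"
    and eff: "sum_list es \<in> effects \<Omega>"
  shows "DEC (sum_list es)"
proof -
  obtain ps where ps: "\<forall>p\<in>set ps. fst p \<ge> 0 \<and> snd p \<in> \<Omega> \<and> (\<exists>e\<in>set es. e \<bullet> snd p = 1)"
    and hps: "hat (sum_list es) = sum_list (map (\<lambda>p. fst p *\<^sub>R snd p) ps)"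
    using list_dec[OF es] by blast
  have "sum_list es \<bullet> snd p = 1" if p: "p \<in> set ps" for p
  proof -
    obtain e where e: "e \<in> set es" "e \<bullet> snd p = 1" using ps p by blast
    have w: "snd p \<in> \<Omega>" using ps p by blast
    have nn: "\<forall>y\<in>set (map (\<lambda>e. e \<bullet> snd p) es). 0 \<le> y"
      using es w by (auto intro!: eff_nonneg simp: pure_effect_def extreme_point_of_def)
    have "1 \<le> sum_list es \<bullet> snd p" unfolding sl_inner using sl_ge[OF _ nn, of 1] e by force
    moreover have "sum_list es \<bullet> snd p \<le> 1" by (rule eff_le1[OF eff w])
    ultimately show ?thesis by simp
  qed
  then show ?thesis unfolding DEC_def using ps hps by (intro exI[of _ ps]) auto
qed

lemma DEC_compl:
  assumes es: "\<forall>e\<in>set es. pure_effect \<Omega> e \<and> indecomposable_effect \<Omega> e"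
    and eff: "uu - sum_list es \<in> effects \<Omega>"
  shows "DEC (uu - sum_list es)"
proof -
  let ?f = "uu - sum_list es"
  obtain c w where c: "c \<ge> 0" and w: "w \<in> \<Omega>" and hw: "hat ?f = c *\<^sub>R w"
    using hat_eff[OF eff] by (rule cone_E)
  show ?thesis
  proof (cases "c = 0")
    case True
    then show ?thesis unfolding DEC_def using hw by (intro exI[of _ "[]"]) simp
  next
    case False
    have zero: "hat ?f \<bullet> e = 0" if e: "e \<in> set es" for e
    proof -
      obtain l we where we: "we \<in> \<Omega>" "hat e = l *\<^sub>R we" "e \<bullet> we = 1"
        using pure_ind es e by metis
      have nn: "\<forall>y\<in>set (map (\<lambda>e. e \<bullet> we) es). 0 \<le> y"
        using es we by (auto intro!: eff_nonneg simp: pure_effect_def extreme_point_of_def)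
      have "1 \<le> sum_list es \<bullet> we" unfolding sl_inner using sl_ge[OF _ nn, of 1] e we by force
      then have "?f \<bullet> we \<le> 0" using uu_w[OF we(1)] by (simp add: inner_diff_left)
      moreover have "?f \<bullet> we \<ge> 0" by (rule eff_nonneg[OF eff we(1)])
      ultimately have f0: "?f \<bullet> we = 0" by simp
      have "hat ?f \<bullet> e = ip (hat ?f) (hat e)" by (simp add: ip_hat)
      also have "\<dots> = l * ip (hat ?f) we" using we by (simp add: ip_scale_right)
      also have "\<dots> = l * (we \<bullet> ?f)" by (simp add: ip_hat2)
      also have "\<dots> = 0" using f0 by (simp add: inner_commute)
      finally show ?thesis .
    qed
    have "hat ?f \<bullet> sum_list es = 0"
      using zero by (simp add: inner_commute[of "hat ?f"] sl_inner) (metis (no_types, lifting) inner_commute map_eq_conv sum_list_0 map_idI)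
    moreover have "sum_list es = uu - ?f" by simp
    ultimately have "hat ?f \<bullet> (uu - ?f) = 0" by simp
    then have "c * (uu \<bullet> w) - c * (?f \<bullet> w) = 0" using hw by (simp add: inner_diff_right inner_commute)
    then have "?f \<bullet> w = 1" using uu_w[OF w] False by simp
    then show ?thesis unfolding DEC_def using hw c w by (intro exI[of _ "[(c, w)]"]) auto
  qed
qed

lemma ideal_dec:
  assumes "ideal_observable \<Omega> A f" "a \<in> A" shows "DEC (f a)"
proof -
  have eff: "f a \<in> effects \<Omega>" using assms unfolding ideal_observable_def observable_def by blast
  obtain es where es: "\<forall>e\<in>set es. pure_effect \<Omega> e \<and> indecomposable_effect \<Omega> e"
    and fa: "f a = sum_list es \<or> f a = uu - sum_list es"
    using assms unfolding ideal_observable_def by blast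
  from fa show ?thesis
  proof
    assume h: "f a = sum_list es"
    show ?thesis using DEC_sum[OF es] eff unfolding h by simp
  next
    assume h: "f a = uu - sum_list es"
    show ?thesis using DEC_compl[OF es] eff unfolding h by simp
  qed
qed

lemma DEC_bound:
  assumes "DEC e" and z: "\<And>w. w \<in> \<Omega> \<Longrightarrow> e \<bullet> w = 1 \<Longrightarrow> z \<bullet> w \<le> D"
  shows "hat e \<bullet> z \<le> D * (uu \<bullet> hat e)"
proof -
  obtain ps where ps: "\<forall>p\<in>set ps. fst p \<ge> 0 \<and> snd p \<in> \<Omega> \<and> e \<bullet> snd p = 1"
    and h: "hat e = sum_list (map (\<lambda>p. fst p *\<^sub>R snd p) ps)" using assms(1) unfolding DEC_def by blast
  have "sum_list (map (\<lambda>p. fst p *\<^sub>R snd p) ps) \<bullet> z \<le> D * (uu \<bullet> sum_list (map (\<lambda>p. fst p *\<^sub>R snd p) ps))"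
    using ps
  proof (induction ps)
    case Nil then show ?case by simp
  next
    case (Cons p ps)
    have p: "fst p \<ge> 0" "snd p \<in> \<Omega>" "e \<bullet> snd p = 1" using Cons.prems by auto
    have "fst p * (snd p \<bullet> z) \<le> fst p * D" using z[OF p(2,3)] p(1) by (simp add: inner_commute mult_left_mono)
    moreover have "uu \<bullet> snd p = 1" using uu_w[OF p(2)] .
    ultimately show ?case using Cons by (simp add: inner_add_left inner_add_right algebra_simps)
  qed
  then show ?thesis using h by simp
qed

end


context gpt begin

lemma werner_side:
  fixes A :: "'a set" and d :: "'a \<Rightarrow> 'a \<Rightarrow> real" and f ft :: "'a \<Rightarrow> real^'n"
  assumes fin: "finite A" and ne: "A \<noteq> {}" and ms: "Metric_space A d"
    and f: "\<forall>a\<in>A. f a \<in> effects \<Omega>" "(\<Sum>a\<in>A. f a) = uu"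
    and ft: "\<forall>a\<in>A. ft a \<in> effects \<Omega>" "(\<Sum>a\<in>A. ft a) = uu"
  shows "werner_D \<Omega> A d ft f \<ge> 0"
    and "\<And>w a. w \<in> \<Omega> \<Longrightarrow> a \<in> A \<Longrightarrow> f a \<bullet> w = 1 \<Longrightarrow>
           (\<Sum>a'\<in>A. d a' a * (ft a' \<bullet> w)) \<le> werner_D \<Omega> A d ft f"
proof -
  interpret Metric_space A d by (rule ms)
  define val where "val w h = \<bar>(\<Sum>a\<in>A. h a * (ft a \<bullet> w)) - (\<Sum>a\<in>A. h a * (f a \<bullet> w))\<bar>" for w h
  define L where "L = lipschitz1 A d"
  obtain a0 where a0: "a0 \<in> A" using ne by blast
  define K where "K = (\<Sum>a\<in>A. d a a0)"
  have sumw: "(\<Sum>a\<in>A. f a \<bullet> w) = 1" "(\<Sum>a\<in>A. ft a \<bullet> w) = 1" if "w \<in> \<Omega>" for w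
  proof -
    show "(\<Sum>a\<in>A. f a \<bullet> w) = 1" using f(2) uu_w[OF that] inner_sum_left[of f A w] by simp
    show "(\<Sum>a\<in>A. ft a \<bullet> w) = 1" using ft(2) uu_w[OF that] inner_sum_left[of ft A w] by simp
  qed
  have bnd: "val w h \<le> K" if w: "w \<in> \<Omega>" and h: "h \<in> L" for w h
  proof -
    have "(\<Sum>a\<in>A. h a * (ft a \<bullet> w)) - (\<Sum>a\<in>A. h a * (f a \<bullet> w))
        = (\<Sum>a\<in>A. (h a - h a0) * (ft a \<bullet> w - f a \<bullet> w)) + h a0 * ((\<Sum>a\<in>A. ft a \<bullet> w) - (\<Sum>a\<in>A. f a \<bullet> w))"
    proof -
      let ?X = "\<lambda>a. ft a \<bullet> w" and ?Y = "\<lambda>a. f a \<bullet> w"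
      have e1: "(\<Sum>a\<in>A. h a * ?X a) - (\<Sum>a\<in>A. h a * ?Y a) = (\<Sum>a\<in>A. h a * ?X a - h a * ?Y a)"
        by (simp add: sum_subtractf)
      have e2: "(\<Sum>a\<in>A. (h a - h a0) * (?X a - ?Y a) + h a0 * (?X a - ?Y a))
          = (\<Sum>a\<in>A. (h a - h a0) * (?X a - ?Y a)) + h a0 * ((\<Sum>a\<in>A. ?X a) - (\<Sum>a\<in>A. ?Y a))"
        by (simp add: sum.distrib sum_distrib_left[symmetric] sum_subtractf)
      have e3: "(\<Sum>a\<in>A. h a * ?X a - h a * ?Y a) = (\<Sum>a\<in>A. (h a - h a0) * (?X a - ?Y a) + h a0 * (?X a - ?Y a))"
        by (rule sum.cong) (simp_all add: algebra_simps)
      show ?thesis using e1 e2 e3 by simp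
    qed
    also have "\<dots> = (\<Sum>a\<in>A. (h a - h a0) * (ft a \<bullet> w - f a \<bullet> w))" using sumw[OF w] by simp
    finally have eq: "val w h = \<bar>\<Sum>a\<in>A. (h a - h a0) * (ft a \<bullet> w - f a \<bullet> w)\<bar>" unfolding val_def by simp
    have "\<bar>\<Sum>a\<in>A. (h a - h a0) * (ft a \<bullet> w - f a \<bullet> w)\<bar> \<le> (\<Sum>a\<in>A. \<bar>(h a - h a0) * (ft a \<bullet> w - f a \<bullet> w)\<bar>)"
      by (rule sum_abs)
    also have "\<dots> \<le> K" unfolding K_def
    proof (rule sum_mono)
      fix a assume a: "a \<in> A"
      have "\<bar>h a - h a0\<bar> \<le> d a a0" using h a a0 unfolding L_def lipschitz1_def by blast
      moreover have "\<bar>ft a \<bullet> w - f a \<bullet> w\<bar> \<le> 1"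
      proof -
        have "0 \<le> f a \<bullet> w" "f a \<bullet> w \<le> 1" "0 \<le> ft a \<bullet> w" "ft a \<bullet> w \<le> 1"
          using f(1) ft(1) a w unfolding effects_def by auto
        then show ?thesis by (simp add: abs_le_iff)
      qed
      ultimately have "\<bar>h a - h a0\<bar> * \<bar>ft a \<bullet> w - f a \<bullet> w\<bar> \<le> d a a0 * 1"
        by (intro mult_mono) auto
      then show "\<bar>(h a - h a0) * (ft a \<bullet> w - f a \<bullet> w)\<bar> \<le> d a a0"
        by (simp only: abs_mult mult_1_right)
    qed
    finally show ?thesis using eq by simp
  qed
  have L0: "(\<lambda>_. 0) \<in> L" unfolding L_def lipschitz1_def by simp
  then have Lne: "L \<noteq> {}" by blast
  have bi: "bdd_above (val w ` L)" if "w \<in> \<Omega>" for w using bnd[OF that] by (intro bdd_aboveI2[where M=K]) auto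
  have inner_le: "(SUP h\<in>L. val w h) \<le> K" if "w \<in> \<Omega>" for w
    by (rule cSUP_least[OF Lne]) (use bnd[OF that] in auto)
  have bo: "bdd_above ((\<lambda>w. SUP h\<in>L. val w h) ` \<Omega>)" using inner_le by (intro bdd_aboveI2[where M=K]) auto
  have DW: "werner_D \<Omega> A d ft f = (SUP w\<in>\<Omega>. SUP h\<in>L. val w h)"
    unfolding werner_D_def val_def L_def ..
  have key: "val w h \<le> werner_D \<Omega> A d ft f" if w: "w \<in> \<Omega>" and h: "h \<in> L" for w h
  proof -
    have "val w h \<le> (SUP h\<in>L. val w h)" by (rule cSUP_upper[OF h bi[OF w]])
    also have "\<dots> \<le> (SUP w\<in>\<Omega>. SUP h\<in>L. val w h)" by (rule cSUP_upper[OF w bo])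
    finally show ?thesis using DW by simp
  qed
  have Omne: "\<Omega> \<noteq> {}" by (rule omega_ne[OF ss])
  then obtain w0 where w0: "w0 \<in> \<Omega>" by blast
  show "werner_D \<Omega> A d ft f \<ge> 0"
    using key[OF w0 L0] unfolding val_def by linarith
  fix w a assume w: "w \<in> \<Omega>" and a: "a \<in> A" and fa: "f a \<bullet> w = 1"
  define h where "h x = d x a" for x
  have hL: "h \<in> L" unfolding L_def lipschitz1_def h_def
  proof (intro CollectI ballI)
    fix a1 a2 assume "a1 \<in> A" "a2 \<in> A"
    then show "\<bar>d a1 a - d a2 a\<bar> \<le> d a1 a2"
      using triangle[of a1 a2 a] triangle[of a2 a1 a] a commute[of a1 a2] by (simp add: abs_le_iff)
  qed
  have f0: "f a' \<bullet> w = 0" if "a' \<in> A" "a' \<noteq> a" for a'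
  proof -
    have "(\<Sum>x\<in>A - {a}. f x \<bullet> w) = 0"
      using sumw(1)[OF w] fa sum.remove[OF fin a, of "\<lambda>x. f x \<bullet> w"] by simp
    moreover have "\<forall>x\<in>A - {a}. 0 \<le> f x \<bullet> w" using f(1) w unfolding effects_def by blast
    ultimately show ?thesis using sum_nonneg_eq_0_iff[of "A - {a}" "\<lambda>x. f x \<bullet> w"] fin that by auto
  qed
  have "(\<Sum>x\<in>A. h x * (f x \<bullet> w)) = h a * (f a \<bullet> w) + (\<Sum>x\<in>A - {a}. h x * (f x \<bullet> w))"
    by (rule sum.remove[OF fin a])
  also have "(\<Sum>x\<in>A - {a}. h x * (f x \<bullet> w)) = 0" using f0 by (intro sum.neutral) auto
  finally have "(\<Sum>x\<in>A. h x * (f x \<bullet> w)) = 0" using fa a unfolding h_def by simp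
  then have "val w h = \<bar>\<Sum>x\<in>A. d x a * (ft x \<bullet> w)\<bar>" unfolding val_def h_def by simp
  then have "(\<Sum>x\<in>A. d x a * (ft x \<bullet> w)) \<le> val w h" by simp
  then show "(\<Sum>a'\<in>A. d a' a * (ft a' \<bullet> w)) \<le> werner_D \<Omega> A d ft f" using key[OF w hL] by simp
qed

end


context gpt begin

lemma width_bound:
  fixes X :: "'a set" and d :: "'a \<Rightarrow> 'a \<Rightarrow> real" and f :: "'a \<Rightarrow> real^'n"
  assumes fin: "finite X" and ms: "Metric_space X d" and a0: "a0 \<in> X" and w: "w \<in> \<Omega>"
    and f: "\<forall>a\<in>X. f a \<in> effects \<Omega>" "(\<Sum>a\<in>X. f a) = uu"
    and e1: "0 < \<epsilon>1" and e: "0 < \<epsilon>" and D: "0 \<le> D"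
    and E: "\<epsilon>1 * (\<Sum>a\<in>X. d a a0 * (f a \<bullet> w)) \<le> \<epsilon> * D"
  shows "\<epsilon>1 / 2 * overall_width X d f \<epsilon> w \<le> D"
proof -
  interpret Metric_space X d by (rule ms)
  define S where "S = {wd. wd > 0 \<and> (\<exists>a\<in>X. (\<Sum>a'\<in>{x\<in>X. d x a \<le> wd / 2}. f a' \<bullet> w) \<ge> 1 - \<epsilon>)}"
  have ow: "overall_width X d f \<epsilon> w = Inf S" unfolding overall_width_def S_def ..
  have bb: "bdd_below S" unfolding S_def by (intro bdd_belowI[where m=0]) auto
  have fnn: "0 \<le> f a \<bullet> w" if "a \<in> X" for a using f(1) that w unfolding effects_def by blast
  have tot: "(\<Sum>a\<in>X. f a \<bullet> w) = 1" using f(2) uu_w[OF w] inner_sum_left[of f X w] by simp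
  have inS: "2 * r \<in> S" if r: "D / \<epsilon>1 < r" for r
  proof -
    have rpos: "r > 0" using r D e1 by (smt (verit) divide_nonneg_pos)
    have Dr: "D < \<epsilon>1 * r" using r e1 by (simp add: divide_less_eq mult.commute)
    let ?In = "{x\<in>X. d x a0 \<le> r}" and ?Out = "{x\<in>X. \<not> d x a0 \<le> r}"
    have XU: "X = ?In \<union> ?Out" by auto
    have split: "(\<Sum>a\<in>X. f a \<bullet> w) = (\<Sum>a\<in>?In. f a \<bullet> w) + (\<Sum>a\<in>?Out. f a \<bullet> w)"
      by (subst XU, rule sum.union_disjoint) (use fin in auto)
    have "r * (\<Sum>a\<in>?Out. f a \<bullet> w) = (\<Sum>a\<in>?Out. r * (f a \<bullet> w))" by (simp add: sum_distrib_left)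
    also have "\<dots> \<le> (\<Sum>a\<in>?Out. d a a0 * (f a \<bullet> w))"
      by (rule sum_mono) (use fnn in \<open>auto intro: mult_right_mono\<close>)
    also have "\<dots> \<le> (\<Sum>a\<in>X. d a a0 * (f a \<bullet> w))"
      by (rule sum_mono2[OF fin]) (use fnn in auto)
    finally have ro: "r * (\<Sum>a\<in>?Out. f a \<bullet> w) \<le> (\<Sum>a\<in>X. d a a0 * (f a \<bullet> w))" .
    have "(\<epsilon>1 * r) * (\<Sum>a\<in>?Out. f a \<bullet> w) \<le> \<epsilon> * D"
    proof -
      have "\<epsilon>1 * (r * (\<Sum>a\<in>?Out. f a \<bullet> w)) \<le> \<epsilon>1 * (\<Sum>a\<in>X. d a a0 * (f a \<bullet> w))"
        using mult_left_mono[OF ro, of \<epsilon>1] e1 by simp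
      then show ?thesis using E by (simp add: mult.assoc)
    qed
    also have "\<dots> \<le> \<epsilon> * (\<epsilon>1 * r)" using Dr e by simp
    finally have "(\<Sum>a\<in>?Out. f a \<bullet> w) \<le> \<epsilon>"
      using e1 rpos by (simp add: mult.commute[of \<epsilon>])
    then have "(\<Sum>a\<in>?In. f a \<bullet> w) \<ge> 1 - \<epsilon>" using split tot by simp
    then show ?thesis unfolding S_def using rpos a0 by auto
  qed
  have "Inf S / 2 \<le> D / \<epsilon>1"
  proof (rule dense_ge)
    fix r assume "D / \<epsilon>1 < r"
    then have "Inf S \<le> 2 * r" using cInf_lower[OF inS bb] by simp
    then show "Inf S / 2 \<le> r" by simp
  qed
  then show ?thesis unfolding ow using e1 by (simp add: field_simps)
qed

lemma hat_sum: "hat (\<Sum>x\<in>S. F x) = (\<Sum>x\<in>S. hat (F x))"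
proof (rule hat_eq)
  show "Mm *v (\<Sum>x\<in>S. hat (F x)) = (\<Sum>x\<in>S. F x)"
    using linear_sum[OF matrix_vector_mul_linear[of Mm], of "\<lambda>x. hat (F x)" S] by (simp add: hat_prop)
qed

lemma swap_ip: "f \<bullet> hat e = hat f \<bullet> e"
proof -
  have "f \<bullet> hat e = ip (hat e) (hat f)" by (simp add: ip_hat inner_commute)
  also have "\<dots> = ip (hat f) (hat e)" by (rule GLi_sym)
  also have "\<dots> = hat f \<bullet> e" by (simp add: ip_hat)
  finally show ?thesis .
qed

lemma side_sum:
  fixes X :: "'a set" and d :: "'a \<Rightarrow> 'a \<Rightarrow> real" and f :: "'a \<Rightarrow> real^'n"
    and P :: "'p set" and m :: "'p \<Rightarrow> real^'n" and \<pi> :: "'p \<Rightarrow> 'a"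
  assumes finP: "finite P" and finX: "finite X" and idl: "ideal_observable \<Omega> X f"
    and hyp: "\<And>a w. a \<in> X \<Longrightarrow> w \<in> \<Omega> \<Longrightarrow> f a \<bullet> w = 1 \<Longrightarrow> (\<Sum>p\<in>P. d a (\<pi> p) * (m p \<bullet> w)) \<le> D"
    and ks: "\<And>p. p \<in> P \<Longrightarrow> hat (m p) = \<kappa> p *\<^sub>R \<sigma> p"
  shows "(\<Sum>p\<in>P. \<kappa> p * (\<Sum>a\<in>X. d a (\<pi> p) * (f a \<bullet> \<sigma> p))) \<le> D * (\<Sum>a\<in>X. uu \<bullet> hat (f a))"
proof -
  define z where "z a = (\<Sum>p\<in>P. d a (\<pi> p) *\<^sub>R m p)" for a
  have "(\<Sum>p\<in>P. \<kappa> p * (\<Sum>a\<in>X. d a (\<pi> p) * (f a \<bullet> \<sigma> p)))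
      = (\<Sum>p\<in>P. \<Sum>a\<in>X. d a (\<pi> p) * (hat (f a) \<bullet> m p))"
  proof (rule sum.cong[OF refl])
    fix p assume p: "p \<in> P"
    have "\<kappa> p * (f a \<bullet> \<sigma> p) = hat (f a) \<bullet> m p" for a
    proof -
      have "\<kappa> p * (f a \<bullet> \<sigma> p) = f a \<bullet> hat (m p)" using ks[OF p] by simp
      also have "\<dots> = hat (f a) \<bullet> m p" by (rule swap_ip)
      finally show ?thesis .
    qed
    then have pt: "\<kappa> p * (d a (\<pi> p) * (f a \<bullet> \<sigma> p)) = d a (\<pi> p) * (hat (f a) \<bullet> m p)" for a
      by (metis mult.left_commute)
    show "\<kappa> p * (\<Sum>a\<in>X. d a (\<pi> p) * (f a \<bullet> \<sigma> p)) = (\<Sum>a\<in>X. d a (\<pi> p) * (hat (f a) \<bullet> m p))"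
      by (simp only: sum_distrib_left pt)
  qed
  also have "\<dots> = (\<Sum>a\<in>X. \<Sum>p\<in>P. d a (\<pi> p) * (hat (f a) \<bullet> m p))" by (rule sum.swap)
  also have "\<dots> = (\<Sum>a\<in>X. hat (f a) \<bullet> z a)" unfolding z_def by (simp add: inner_sum_right)
  also have "\<dots> \<le> (\<Sum>a\<in>X. D * (uu \<bullet> hat (f a)))"
  proof (rule sum_mono)
    fix a assume a: "a \<in> X"
    show "hat (f a) \<bullet> z a \<le> D * (uu \<bullet> hat (f a))"
    proof (rule DEC_bound[OF ideal_dec[OF idl a]])
      fix w assume w: "w \<in> \<Omega>" "f a \<bullet> w = 1"
      have "z a \<bullet> w = (\<Sum>p\<in>P. d a (\<pi> p) * (m p \<bullet> w))" unfolding z_def by (simp add: inner_sum_left)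
      then show "z a \<bullet> w \<le> D" using hyp[OF a w] by simp
    qed
  qed
  also have "\<dots> = D * (\<Sum>a\<in>X. uu \<bullet> hat (f a))" by (simp add: sum_distrib_left)
  finally show ?thesis .
qed

end


context gpt begin

lemma main:
  fixes A :: "'a set" and dA :: "'a \<Rightarrow> 'a \<Rightarrow> real" and f :: "'a \<Rightarrow> real^'n"
    and B :: "'b set" and dB :: "'b \<Rightarrow> 'b \<Rightarrow> real" and g :: "'b \<Rightarrow> real^'n"
    and m :: "'a \<times> 'b \<Rightarrow> real^'n" and \<epsilon>1 \<epsilon>2 :: real
  assumes finA: "finite A" and msA: "Metric_space A dA" and finB: "finite B" and msB: "Metric_space B dB"
    and idF: "ideal_observable \<Omega> A f" and idG: "ideal_observable \<Omega> B g" and obs: "observable \<Omega> (A \<times> B) m"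
    and e1: "0 < \<epsilon>1" and e2: "0 < \<epsilon>2"
  shows "\<exists>\<omega>\<in>\<Omega>.
     werner_D \<Omega> A dA (\<lambda>a. \<Sum>b\<in>B. m (a, b)) f \<ge> \<epsilon>1 / 2 * overall_width A dA f (\<epsilon>1 + \<epsilon>2) \<omega>
   \<and> werner_D \<Omega> B dB (\<lambda>b. \<Sum>a\<in>A. m (a, b)) g \<ge> \<epsilon>2 / 2 * overall_width B dB g (\<epsilon>1 + \<epsilon>2) \<omega>"
proof -
  define ft where "ft = (\<lambda>a. \<Sum>b\<in>B. m (a, b))"
  define gt where "gt = (\<lambda>b. \<Sum>a\<in>A. m (a, b))"
  define \<epsilon> where "\<epsilon> = \<epsilon>1 + \<epsilon>2"
  have e: "0 < \<epsilon>" using e1 e2 unfolding \<epsilon>_def by simp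
  define DF where "DF = werner_D \<Omega> A dA ft f"
  define DG where "DG = werner_D \<Omega> B dB gt g"
  let ?P = "A \<times> B"
  have finP: "finite ?P" using finA finB by simp
  have oF: "observable \<Omega> A f" and oG: "observable \<Omega> B g"
    using idF idG unfolding ideal_observable_def by auto
  have Ane: "A \<noteq> {}" and fe: "\<forall>a\<in>A. f a \<in> effects \<Omega>" and fs: "(\<Sum>a\<in>A. f a) = uu"
    using oF unfolding observable_def by auto
  have Bne: "B \<noteq> {}" and ge: "\<forall>b\<in>B. g b \<in> effects \<Omega>" and gs: "(\<Sum>b\<in>B. g b) = uu"
    using oG unfolding observable_def by auto
  have me: "\<forall>p\<in>?P. m p \<in> effects \<Omega>" and ms: "(\<Sum>p\<in>?P. m p) = uu"
    using obs unfolding observable_def by auto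
  have mnn: "0 \<le> m p \<bullet> w" if "p \<in> ?P" "w \<in> \<Omega>" for p w using me that unfolding effects_def by blast
  have ftsum: "(\<Sum>a\<in>A. ft a) = uu"
    unfolding ft_def using ms by (simp add: sum.cartesian_product)
  have gtsum: "(\<Sum>b\<in>B. gt b) = uu"
    unfolding gt_def using ms by (subst sum.swap) (simp add: sum.cartesian_product)
  have ftw: "ft a \<bullet> w = (\<Sum>b\<in>B. m (a, b) \<bullet> w)" for a w unfolding ft_def by (simp add: inner_sum_left)
  have gtw: "gt b \<bullet> w = (\<Sum>a\<in>A. m (a, b) \<bullet> w)" for b w unfolding gt_def by (simp add: inner_sum_left)
  have fte: "\<forall>a\<in>A. ft a \<in> effects \<Omega>"
  proof (intro ballI)
    fix a assume a: "a \<in> A"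
    have nn: "0 \<le> ft a' \<bullet> w" if "a' \<in> A" "w \<in> \<Omega>" for a' w
      unfolding ftw using mnn that by (auto intro: sum_nonneg)
    show "ft a \<in> effects \<Omega>" unfolding effects_def
    proof (intro CollectI ballI conjI)
      fix w assume w: "w \<in> \<Omega>"
      show "0 \<le> ft a \<bullet> w" by (rule nn[OF a w])
      have "ft a \<bullet> w \<le> (\<Sum>a'\<in>A. ft a' \<bullet> w)" by (rule member_le_sum[OF a]) (use nn w finA in auto)
      also have "\<dots> = 1" using ftsum uu_w[OF w] inner_sum_left[of ft A w] by simp
      finally show "ft a \<bullet> w \<le> 1" .
    qed
  qed
  have gte: "\<forall>b\<in>B. gt b \<in> effects \<Omega>"
  proof (intro ballI)
    fix b assume b: "b \<in> B"
    have nn: "0 \<le> gt b' \<bullet> w" if "b' \<in> B" "w \<in> \<Omega>" for b' w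
      unfolding gtw using mnn that by (auto intro: sum_nonneg)
    show "gt b \<in> effects \<Omega>" unfolding effects_def
    proof (intro CollectI ballI conjI)
      fix w assume w: "w \<in> \<Omega>"
      show "0 \<le> gt b \<bullet> w" by (rule nn[OF b w])
      have "gt b \<bullet> w \<le> (\<Sum>b'\<in>B. gt b' \<bullet> w)" by (rule member_le_sum[OF b]) (use nn w finB in auto)
      also have "\<dots> = 1" using gtsum uu_w[OF w] inner_sum_left[of gt B w] by simp
      finally show "gt b \<bullet> w \<le> 1" .
    qed
  qed
  have DF0: "DF \<ge> 0" and hypF: "\<And>w a. w \<in> \<Omega> \<Longrightarrow> a \<in> A \<Longrightarrow> f a \<bullet> w = 1 \<Longrightarrow>
           (\<Sum>a'\<in>A. dA a' a * (ft a' \<bullet> w)) \<le> DF"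
    unfolding DF_def using werner_side[OF finA Ane msA fe fs fte ftsum] by auto
  have DG0: "DG \<ge> 0" and hypG: "\<And>w b. w \<in> \<Omega> \<Longrightarrow> b \<in> B \<Longrightarrow> g b \<bullet> w = 1 \<Longrightarrow>
           (\<Sum>b'\<in>B. dB b' b * (gt b' \<bullet> w)) \<le> DG"
    unfolding DG_def using werner_side[OF finB Bne msB ge gs gte gtsum] by auto

  define \<kappa> where "\<kappa> p = uu \<bullet> hat (m p)" for p
  define \<sigma> where "\<sigma> p = (SOME w. w \<in> \<Omega> \<and> hat (m p) = \<kappa> p *\<^sub>R w)" for p
  have ks: "\<sigma> p \<in> \<Omega> \<and> hat (m p) = \<kappa> p *\<^sub>R \<sigma> p" and k0: "\<kappa> p \<ge> 0" if p: "p \<in> ?P" for p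
  proof -
    obtain c w where c: "c \<ge> 0" "w \<in> \<Omega>" "hat (m p) = c *\<^sub>R w"
      using hat_eff me p by (meson cone_E)
    have "\<kappa> p = c" unfolding \<kappa>_def using c uu_w by simp
    then have ex: "\<exists>w. w \<in> \<Omega> \<and> hat (m p) = \<kappa> p *\<^sub>R w" using c by blast
    show "\<sigma> p \<in> \<Omega> \<and> hat (m p) = \<kappa> p *\<^sub>R \<sigma> p" unfolding \<sigma>_def by (rule someI_ex[OF ex])
    show "\<kappa> p \<ge> 0" using \<open>\<kappa> p = c\<close> c by simp
  qed
  define K where "K = uu \<bullet> hat uu"
  have Ksum: "(\<Sum>p\<in>?P. \<kappa> p) = K"
    unfolding \<kappa>_def K_def using ms by (simp add: inner_sum_right[symmetric] hat_sum[symmetric])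
  have KF: "(\<Sum>a\<in>A. uu \<bullet> hat (f a)) = K"
    unfolding K_def using fs by (simp add: inner_sum_right[symmetric] hat_sum[symmetric])
  have KG: "(\<Sum>b\<in>B. uu \<bullet> hat (g b)) = K"
    unfolding K_def using gs by (simp add: inner_sum_right[symmetric] hat_sum[symmetric])
  have Kpos: "K > 0"
  proof -
    obtain w where w: "w \<in> \<Omega>" using omega_ne[OF ss] by blast
    have "hat uu \<noteq> 0"
    proof
      assume "hat uu = 0"
      then have "uu = 0" using hat_prop[of uu] by simp
      then show False using uu_w[OF w] by simp
    qed
    then have "ip (hat uu) (hat uu) > 0" by (rule GLi_pos)
    then show ?thesis unfolding K_def by (simp add: ip_hat inner_commute)
  qed
  define EF where "EF p = (\<Sum>a\<in>A. dA a (fst p) * (f a \<bullet> \<sigma> p))" for p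
  define EG where "EG p = (\<Sum>b\<in>B. dB b (snd p) * (g b \<bullet> \<sigma> p))" for p
  have EF0: "EF p \<ge> 0" if "p \<in> ?P" for p
    unfolding EF_def using ks[OF that] fe Metric_space.nonneg[OF msA]
    by (intro sum_nonneg mult_nonneg_nonneg) (auto simp: effects_def)
  have EG0: "EG p \<ge> 0" if "p \<in> ?P" for p
    unfolding EG_def using ks[OF that] ge Metric_space.nonneg[OF msB]
    by (intro sum_nonneg mult_nonneg_nonneg) (auto simp: effects_def)
  have SF: "(\<Sum>p\<in>?P. \<kappa> p * EF p) \<le> DF * K"
  proof -
    have "(\<Sum>p\<in>?P. \<kappa> p * EF p) \<le> DF * (\<Sum>a\<in>A. uu \<bullet> hat (f a))"
      unfolding EF_def
    proof (rule side_sum[OF finP finA idF _ conjunct2[OF ks]])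
      fix a w assume a: "a \<in> A" and w: "w \<in> \<Omega>" and fa: "f a \<bullet> w = 1"
      have "(\<Sum>p\<in>?P. dA a (fst p) * (m p \<bullet> w)) = (\<Sum>a'\<in>A. \<Sum>b\<in>B. dA a a' * (m (a', b) \<bullet> w))"
        by (simp add: sum.cartesian_product case_prod_beta)
      also have "\<dots> = (\<Sum>a'\<in>A. dA a' a * (ft a' \<bullet> w))"
        unfolding ftw by (simp add: sum_distrib_left Metric_space.commute[OF msA, of a])
      also have "\<dots> \<le> DF" by (rule hypF[OF w a fa])
      finally show "(\<Sum>p\<in>?P. dA a (fst p) * (m p \<bullet> w)) \<le> DF" .
    qed
    then show ?thesis using KF by simp
  qed
  have SG: "(\<Sum>p\<in>?P. \<kappa> p * EG p) \<le> DG * K"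
  proof -
    have "(\<Sum>p\<in>?P. \<kappa> p * EG p) \<le> DG * (\<Sum>b\<in>B. uu \<bullet> hat (g b))"
      unfolding EG_def
    proof (rule side_sum[OF finP finB idG _ conjunct2[OF ks]])
      fix b w assume b: "b \<in> B" and w: "w \<in> \<Omega>" and gb: "g b \<bullet> w = 1"
      have "(\<Sum>p\<in>?P. dB b (snd p) * (m p \<bullet> w)) = (\<Sum>a\<in>A. \<Sum>b'\<in>B. dB b b' * (m (a, b') \<bullet> w))"
        by (simp add: sum.cartesian_product case_prod_beta)
      also have "\<dots> = (\<Sum>b'\<in>B. \<Sum>a\<in>A. dB b b' * (m (a, b') \<bullet> w))" by (rule sum.swap)
      also have "\<dots> = (\<Sum>b'\<in>B. dB b' b * (gt b' \<bullet> w))"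
        unfolding gtw by (simp add: sum_distrib_left Metric_space.commute[OF msB, of b])
      also have "\<dots> \<le> DG" by (rule hypG[OF w b gb])
      finally show "(\<Sum>p\<in>?P. dB b (snd p) * (m p \<bullet> w)) \<le> DG" .
    qed
    then show ?thesis using KG by simp
  qed

  define X where "X p = EF p / DF" for p
  define Y where "Y p = EG p / DG" for p
  have X0: "X p \<ge> 0" if "p \<in> ?P" for p unfolding X_def using EF0[OF that] DF0 by simp
  have Y0: "Y p \<ge> 0" if "p \<in> ?P" for p unfolding Y_def using EG0[OF that] DG0 by simp
  have SX: "(\<Sum>p\<in>?P. \<kappa> p * X p) \<le> K"
  proof (cases "DF = 0")
    case True then show ?thesis using Kpos unfolding X_def by simp
  next
    case False
    then have DFp: "DF > 0" using DF0 by simp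
    have "(\<Sum>p\<in>?P. \<kappa> p * X p) = (\<Sum>p\<in>?P. \<kappa> p * EF p) / DF"
      unfolding X_def by (simp add: sum_divide_distrib)
    also have "\<dots> \<le> K" using SF DFp by (simp add: divide_le_eq mult.commute)
    finally show ?thesis .
  qed
  have SY: "(\<Sum>p\<in>?P. \<kappa> p * Y p) \<le> K"
  proof (cases "DG = 0")
    case True then show ?thesis using Kpos unfolding Y_def by simp
  next
    case False
    then have DGp: "DG > 0" using DG0 by simp
    have "(\<Sum>p\<in>?P. \<kappa> p * Y p) = (\<Sum>p\<in>?P. \<kappa> p * EG p) / DG"
      unfolding Y_def by (simp add: sum_divide_distrib)
    also have "\<dots> \<le> K" using SG DGp by (simp add: divide_le_eq mult.commute)
    finally show ?thesis .
  qed
  obtain p where p: "p \<in> ?P" and kp: "\<kappa> p > 0" and XY: "\<epsilon>1 * X p + \<epsilon>2 * Y p \<le> \<epsilon>"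
  proof (rule ccontr)
    assume "\<not> thesis"
    then have bad: "\<And>p. p \<in> ?P \<Longrightarrow> \<kappa> p > 0 \<Longrightarrow> \<epsilon>1 * X p + \<epsilon>2 * Y p > \<epsilon>"
      using that by (meson not_le)
    define T where "T p = \<kappa> p * (\<epsilon>1 * X p + \<epsilon>2 * Y p - \<epsilon>)" for p
    have T0: "T p \<ge> 0" if "p \<in> ?P" for p
    proof (cases "\<kappa> p = 0")
      case True then show ?thesis unfolding T_def by simp
    next
      case False
      then have "\<kappa> p > 0" using k0[OF that] by simp
      then show ?thesis unfolding T_def using bad[OF that] by simp
    qed
    obtain p0 where p0: "p0 \<in> ?P" "\<kappa> p0 > 0"
    proof (rule ccontr)
      assume "\<not> thesis"
      have "\<forall>q\<in>?P. \<kappa> q = 0"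
      proof
        fix q assume q: "q \<in> ?P"
        show "\<kappa> q = 0" using that[OF q] k0[OF q] \<open>\<not> thesis\<close> by force
      qed
      then have "(\<Sum>p\<in>?P. \<kappa> p) = 0" by (intro sum.neutral) blast
      then show False using Ksum Kpos by simp
    qed
    have "T p0 > 0" unfolding T_def using bad[OF p0] p0 by simp
    then have "(\<Sum>p\<in>?P. T p) > 0" using sum_pos2[OF finP p0(1), of T] T0 by blast
    moreover have "(\<Sum>p\<in>?P. T p) = \<epsilon>1 * (\<Sum>p\<in>?P. \<kappa> p * X p) + \<epsilon>2 * (\<Sum>p\<in>?P. \<kappa> p * Y p) - \<epsilon> * (\<Sum>p\<in>?P. \<kappa> p)"
    proof -
      have "T p = \<epsilon>1 * (\<kappa> p * X p) + \<epsilon>2 * (\<kappa> p * Y p) - \<epsilon> * \<kappa> p" for p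
        unfolding T_def by (simp add: algebra_simps)
      then show ?thesis by (simp add: sum.distrib sum_subtractf sum_distrib_left)
    qed
    moreover have "\<epsilon>1 * (\<Sum>p\<in>?P. \<kappa> p * X p) \<le> \<epsilon>1 * K" using SX e1 by simp
    moreover have "\<epsilon>2 * (\<Sum>p\<in>?P. \<kappa> p * Y p) \<le> \<epsilon>2 * K" using SY e2 by simp
    ultimately show False using Ksum unfolding \<epsilon>_def by (simp add: algebra_simps)
  qed
  have w: "\<sigma> p \<in> \<Omega>" using ks[OF p] by simp
  have condF: "\<epsilon>1 * EF p \<le> \<epsilon> * DF"
  proof (cases "DF = 0")
    case True
    have nn: "\<And>q. q \<in> ?P \<Longrightarrow> 0 \<le> \<kappa> q * EF q" using k0 EF0 by simp
    have s0: "0 \<le> (\<Sum>q\<in>?P. \<kappa> q * EF q)" by (rule sum_nonneg) (rule nn)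
    have "(\<Sum>q\<in>?P. \<kappa> q * EF q) \<le> 0" using SF True by simp
    then have z: "(\<Sum>q\<in>?P. \<kappa> q * EF q) = 0" using s0 by linarith
    have "\<forall>q\<in>?P. \<kappa> q * EF q = 0" by (rule iffD1[OF sum_nonneg_eq_0_iff[OF finP nn] z])
    then have "\<kappa> p * EF p = 0" using p by (rule bspec)
    then have "EF p = 0" using kp by simp
    then show ?thesis using True by simp
  next
    case False
    then have Dp: "DF > 0" using DF0 by simp
    have "0 \<le> \<epsilon>2 * Y p" using Y0[OF p] e2 by simp
    then have le: "\<epsilon>1 * X p \<le> \<epsilon>" using XY by linarith
    have "\<epsilon>1 * EF p = (\<epsilon>1 * X p) * DF" unfolding X_def using Dp by simp
    also have "\<dots> \<le> \<epsilon> * DF" using le Dp by (intro mult_right_mono) auto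
    finally show ?thesis .
  qed
  have condG: "\<epsilon>2 * EG p \<le> \<epsilon> * DG"
  proof (cases "DG = 0")
    case True
    have nn: "\<And>q. q \<in> ?P \<Longrightarrow> 0 \<le> \<kappa> q * EG q" using k0 EG0 by simp
    have s0: "0 \<le> (\<Sum>q\<in>?P. \<kappa> q * EG q)" by (rule sum_nonneg) (rule nn)
    have "(\<Sum>q\<in>?P. \<kappa> q * EG q) \<le> 0" using SG True by simp
    then have z: "(\<Sum>q\<in>?P. \<kappa> q * EG q) = 0" using s0 by linarith
    have "\<forall>q\<in>?P. \<kappa> q * EG q = 0" by (rule iffD1[OF sum_nonneg_eq_0_iff[OF finP nn] z])
    then have "\<kappa> p * EG p = 0" using p by (rule bspec)
    then have "EG p = 0" using kp by simp
    then show ?thesis using True by simp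
  next
    case False
    then have Dp: "DG > 0" using DG0 by simp
    have "0 \<le> \<epsilon>1 * X p" using X0[OF p] e1 by simp
    then have le: "\<epsilon>2 * Y p \<le> \<epsilon>" using XY by linarith
    have "\<epsilon>2 * EG p = (\<epsilon>2 * Y p) * DG" unfolding Y_def using Dp by simp
    also have "\<dots> \<le> \<epsilon> * DG" using le Dp by (intro mult_right_mono) auto
    finally show ?thesis .
  qed
  have pA: "fst p \<in> A" and pB: "snd p \<in> B" using p by auto
  have "\<epsilon>1 / 2 * overall_width A dA f \<epsilon> (\<sigma> p) \<le> DF"
    by (rule width_bound[OF finA msA pA w fe fs e1 e DF0]) (use condF in \<open>simp add: EF_def\<close>)
  moreover have "\<epsilon>2 / 2 * overall_width B dB g \<epsilon> (\<sigma> p) \<le> DG"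
    by (rule width_bound[OF finB msB pB w ge gs e2 e DG0]) (use condG in \<open>simp add: EG_def\<close>)
  ultimately show ?thesis using w unfolding DF_def DG_def ft_def gt_def \<epsilon>_def by blast
qed

end

theorem corollary3p1:
  fixes \<Omega> :: "(real^'n) set"
    and A :: "'a set" and dA :: "'a \<Rightarrow> 'a \<Rightarrow> real" and f :: "'a \<Rightarrow> real^'n"
    and B :: "'b set" and dB :: "'b \<Rightarrow> 'b \<Rightarrow> real" and g :: "'b \<Rightarrow> real^'n"
    and m :: "'a \<times> 'b \<Rightarrow> real^'n"
    and \<epsilon>1 \<epsilon>2 :: real
  assumes "state_space \<Omega>"
    and "transitive_state_space \<Omega>"
    and "self_dual_GL \<Omega>"
    and "finite A" and "Metric_space A dA"
    and "finite B" and "Metric_space B dB"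
    and "ideal_observable \<Omega> A f"
    and "ideal_observable \<Omega> B g"
    and "observable \<Omega> (A \<times> B) m"
    and "0 < \<epsilon>1" and "\<epsilon>1 \<le> 1" and "0 < \<epsilon>2" and "\<epsilon>2 \<le> 1" and "\<epsilon>1 + \<epsilon>2 \<le> 1"
  shows "\<exists>\<omega>\<in>\<Omega>.
     werner_D \<Omega> A dA (\<lambda>a. \<Sum>b\<in>B. m (a, b)) f \<ge> \<epsilon>1 / 2 * overall_width A dA f (\<epsilon>1 + \<epsilon>2) \<omega>
   \<and> werner_D \<Omega> B dB (\<lambda>b. \<Sum>a\<in>A. m (a, b)) g \<ge> \<epsilon>2 / 2 * overall_width B dB g (\<epsilon>1 + \<epsilon>2) \<omega>"
proof -
  obtain \<mu> where hg: "haar_GL \<Omega> \<mu>"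
    and sdl: "positive_cone \<Omega> = {y. \<forall>x\<in>positive_cone \<Omega>. GL_inner \<mu> x y \<ge> 0}"
    using assms(3) unfolding self_dual_GL_def by blast
  interpret gpt \<Omega> \<mu>
    by unfold_locales (rule assms(1), rule hg, rule assms(2), rule sdl)
  show ?thesis by (rule main[OF assms(4,5,6,7,8,9,10,11,13)])
qed

end
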